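(* Let $G=(V,E)$ be an oriented graph, $\omega=e^{2\pi i/5}$, and $V'\subseteq V$. Let $E'_1,E'_2,\dots$ be the edge sets $E'\subseteq E$ with $|E'|=|V'|$ such that $(V',E'_j)$ is all-regular, and for each $j$ let $n_\alpha^{(j)},n_\beta^{(j)},n_0^{(j)}$ be the numbers of alpha, beta and vanishing unicyclic components of $(V',E'_j)$ respectively. Then, with $\phi=(1+\sqrt5)/2$, $$\det L_\omega[V']=\sum_j \delta_0\big(n_0^{(j)}\big)\,(\sqrt5)^{\,n_\alpha^{(j)}+n_\beta^{(j)}}\,\phi^{\,n_\alpha^{(j)}-n_\beta^{(j)}},$$ where $\delta_0(x)=1$ if $x=0$ and $0$ otherwise.
   Context: An oriented graph is a finite directed graph with no loops, no multiple arcs, and no pair of opposite arcs. $L_\omega(G)$ is the $V\times V$ matrix with diagonal entry at $u$ the number of arcs incident with $u$ and $(u,v)$ entry ($u\ne v$) $-\omega$ if $u\to v$, $-\overline\omega$ if $v\to u$, $0$ otherwise; $L_\omega[V']$ is its principal submatrix on $V'$. A substructure is $(V',E')$ with $V'\subseteq V$, $E'\subseteq E$ (arcs may leave $V'$). Its connected components are the classes $V'_i$ of vertices of $V'$ joined by paths (ignoring directions) with vertices in $V'$ and arcs in $E'$, together with the sets $E'_i$ of arcs of $E'$ having an endpoint in $V'_i$; it is all-regular if $|V'_i|=|E'_i|$ for all $i$. A unicyclic component is a component whose arcs all have both ends in $V'_i$ and whose underlying graph is connected with exactly one cycle. For a cycle of length $k$, traverse it in the direction for which the number $g$ of arcs against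 the traversal satisfies $0\le g\le\lfloor k/2\rfloor$ ($g$ = number of negative arcs). A unicyclic component whose cycle has length $k$ and $g$ negative arcs is called alpha if $k-2g\equiv 2,3\pmod 5$, beta if $k-2g\equiv1,4\pmod5$, and vanishing if $k-2g\equiv0\pmod5$. *)

theory Defs
  imports Complex_Main "HOL-Combinatorics.Permutations"
begin

definition oriented_graph :: "'a set \<Rightarrow> ('a \<times> 'a) set \<Rightarrow> bool" where
  "oriented_graph V E \<longleftrightarrow> finite V \<and> E \<subseteq> V \<times> V
     \<and> (\<forall>u. (u, u) \<notin> E) \<and> (\<forall>u v. (u, v) \<in> E \<longrightarrow> (v, u) \<notin> E)"

definition omega5 :: complex where
  "omega5 = exp (2 * pi * \<i> / 5)"

definition Lmat :: "complex \<Rightarrow> ('a \<times> 'a) set \<Rightarrow> 'a \<Rightarrow> 'a \<Rightarrow> complex" where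
  "Lmat w E u v =
     (if u = v then of_nat (card {e \<in> E. fst e = u \<or> snd e = u})
      else if (u, v) \<in> E then - w
      else if (v, u) \<in> E then - cnj w
      else 0)"

text \<open>Determinant of the principal submatrix on a finite index set (Leibniz formula,
  exactly as the library's det is defined).\<close>
definition det_on :: "'a set \<Rightarrow> ('a \<Rightarrow> 'a \<Rightarrow> complex) \<Rightarrow> complex" where
  "det_on S M = (\<Sum>p\<in>{p. p permutes S}. of_int (sign p) * (\<Prod>i\<in>S. M i (p i)))"

definition sub_adj :: "'a set \<Rightarrow> ('a \<times> 'a) set \<Rightarrow> ('a \<times> 'a) set" where
  "sub_adj V' E' = {(u, v). u \<in> V' \<and> v \<in> V' \<and> ((u, v) \<in> E' \<or> (v, u) \<in> E')}"

definition sub_conn :: "'a set \<Rightarrow> ('a \<times> 'a) set \<Rightarrow> ('a \<times> 'a) set" where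
  "sub_conn V' E' = {(u, v). u \<in> V' \<and> v \<in> V' \<and> (u, v) \<in> (sub_adj V' E')\<^sup>*}"

definition components :: "'a set \<Rightarrow> ('a \<times> 'a) set \<Rightarrow> 'a set set" where
  "components V' E' = V' // sub_conn V' E'"

definition comp_arcs :: "('a \<times> 'a) set \<Rightarrow> 'a set \<Rightarrow> ('a \<times> 'a) set" where
  "comp_arcs E' C = {e \<in> E'. fst e \<in> C \<or> snd e \<in> C}"

definition all_regular :: "'a set \<Rightarrow> ('a \<times> 'a) set \<Rightarrow> bool" where
  "all_regular V' E' \<longleftrightarrow> (\<forall>C \<in> components V' E'. card C = card (comp_arcs E' C))"

definition joined :: "('a \<times> 'a) set \<Rightarrow> 'a \<Rightarrow> 'a \<Rightarrow> bool" where
  "joined A u v \<longleftrightarrow> (u, v) \<in> A \<or> (v, u) \<in> A"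

definition cycle_list :: "('a \<times> 'a) set \<Rightarrow> 'a list \<Rightarrow> bool" where
  "cycle_list A vs \<longleftrightarrow> distinct vs \<and> length vs \<ge> 3 \<and>
     (\<forall>j < length vs. joined A (vs ! j) (vs ! ((j + 1) mod length vs)))"

definition cycle_arcs :: "('a \<times> 'a) set \<Rightarrow> 'a list \<Rightarrow> ('a \<times> 'a) set" where
  "cycle_arcs A vs = {e \<in> A. \<exists>j < length vs.
       e = (vs ! j, vs ! ((j + 1) mod length vs)) \<or> e = (vs ! ((j + 1) mod length vs), vs ! j)}"

text \<open>A cycle (as a subgraph, i.e. its arc set).\<close>
definition is_cycle :: "('a \<times> 'a) set \<Rightarrow> ('a \<times> 'a) set \<Rightarrow> bool" where
  "is_cycle A Z \<longleftrightarrow> (\<exists>vs. cycle_list A vs \<and> Z = cycle_arcs A vs)"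

definition unicyclic :: "'a set \<Rightarrow> ('a \<times> 'a) set \<Rightarrow> bool" where
  "unicyclic C A \<longleftrightarrow> (\<forall>e \<in> A. fst e \<in> C \<and> snd e \<in> C)
     \<and> (\<forall>u \<in> C. \<forall>v \<in> C. (u, v) \<in> (sub_adj C A)\<^sup>*)
     \<and> (\<exists>!Z. is_cycle A Z)"

definition fwd_count :: "('a \<times> 'a) set \<Rightarrow> 'a list \<Rightarrow> nat" where
  "fwd_count A vs = card {j. j < length vs \<and> (vs ! j, vs ! ((j + 1) mod length vs)) \<in> A}"

text \<open>k - 2g where k is the cycle length and g the number of negative arcs in the traversal
  direction with g \<le> floor(k/2), i.e. g = min(forward, backward).\<close>
definition cyc_val :: "('a \<times> 'a) set \<Rightarrow> 'a list \<Rightarrow> nat" where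
  "cyc_val A vs = (let k = length vs; f = fwd_count A vs; g = min (k - f) f in k - 2 * g)"

definition alpha_comp :: "'a set \<Rightarrow> ('a \<times> 'a) set \<Rightarrow> bool" where
  "alpha_comp C A \<longleftrightarrow> unicyclic C A \<and>
     (\<exists>vs. cycle_list A vs \<and> cyc_val A vs mod 5 \<in> {2, 3})"

definition beta_comp :: "'a set \<Rightarrow> ('a \<times> 'a) set \<Rightarrow> bool" where
  "beta_comp C A \<longleftrightarrow> unicyclic C A \<and>
     (\<exists>vs. cycle_list A vs \<and> cyc_val A vs mod 5 \<in> {1, 4})"

definition vanishing_comp :: "'a set \<Rightarrow> ('a \<times> 'a) set \<Rightarrow> bool" where
  "vanishing_comp C A \<longleftrightarrow> unicyclic C A \<and>
     (\<exists>vs. cycle_list A vs \<and> cyc_val A vs mod 5 = 0)"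

definition n_alpha :: "'a set \<Rightarrow> ('a \<times> 'a) set \<Rightarrow> nat" where
  "n_alpha V' E' = card {C \<in> components V' E'. alpha_comp C (comp_arcs E' C)}"

definition n_beta :: "'a set \<Rightarrow> ('a \<times> 'a) set \<Rightarrow> nat" where
  "n_beta V' E' = card {C \<in> components V' E'. beta_comp C (comp_arcs E' C)}"

definition n_van :: "'a set \<Rightarrow> ('a \<times> 'a) set \<Rightarrow> nat" where
  "n_van V' E' = card {C \<in> components V' E'. vanishing_comp C (comp_arcs E' C)}"

definition delta0 :: "nat \<Rightarrow> real" where
  "delta0 x = (if x = 0 then 1 else 0)"

end

theory Submission
  imports Defs "HOL-Combinatorics.Cycles" "HOL-Library.FuncSet"
begin

definition Mi :: "('a \<times> 'a) \<Rightarrow> 'a \<Rightarrow> complex" where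
  "Mi e i = (if i = fst e then 1 else if i = snd e then - cnj omega5 else 0)"

definition Bj :: "'a set \<Rightarrow> ('a \<times> 'a) set \<Rightarrow> ('a \<Rightarrow> 'a \<times> 'a) set" where
  "Bj S F = {g. g \<in> extensional S \<and> bij_betw g S F}"

definition VB :: "'a set \<Rightarrow> ('a \<times> 'a) set \<Rightarrow> ('a \<Rightarrow> 'a \<times> 'a) set" where
  "VB S F = {g. g \<in> extensional S \<and> bij_betw g S F \<and> (\<forall>i\<in>S. fst (g i) = i \<or> snd (g i) = i)}"

definition relp :: "'a set \<Rightarrow> ('a \<Rightarrow> 'a \<times> 'a) \<Rightarrow> ('a \<Rightarrow> 'a \<times> 'a) \<Rightarrow> 'a \<Rightarrow> 'a" where
  "relp S g h = (\<lambda>x. if x \<in> S then inv_into S h (g x) else x)"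

definition qterm :: "'a set \<Rightarrow> ('a \<Rightarrow> 'a \<times> 'a) \<Rightarrow> ('a \<Rightarrow> 'a \<times> 'a) \<Rightarrow> complex" where
  "qterm S g h = of_int (sign (relp S g h)) * (\<Prod>i\<in>S. Mi (g i) i * cnj (Mi (h i) i))"

definition Q :: "'a set \<Rightarrow> ('a \<times> 'a) set \<Rightarrow> complex" where
  "Q S F = (\<Sum>g\<in>VB S F. \<Sum>h\<in>VB S F. qterm S g h)"

lemma omega5_norm: "cnj omega5 * omega5 = 1"
proof -
  have "cmod omega5 = 1" unfolding omega5_def by (simp add: norm_exp_eq_Re)
  thus ?thesis using complex_norm_square[of omega5] by (simp add: mult.commute)
qed

lemma Mi_norm: "fst e \<noteq> snd e \<Longrightarrow> Mi e i * cnj (Mi e i) = (if i = fst e \<or> i = snd e then 1 else 0)"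
  unfolding Mi_def using omega5_norm by (auto simp: mult.commute)

lemma finite_Bj: "finite S \<Longrightarrow> finite F \<Longrightarrow> finite (Bj S F)"
proof (rule finite_subset[of _ "PiE S (\<lambda>_. F)"])
  show "Bj S F \<subseteq> PiE S (\<lambda>_. F)" by (auto simp: Bj_def PiE_iff bij_betw_def extensional_def)
qed (auto intro: finite_PiE)

lemma VB_sub_Bj: "VB S F \<subseteq> Bj S F" by (auto simp: VB_def Bj_def)

lemma finite_VB: assumes "finite S" "finite F" shows "finite (VB S F)"
  using VB_sub_Bj finite_Bj[OF assms] by (rule finite_subset)

lemma relp_permutes:
  assumes "bij_betw g S F" "bij_betw h S F"
  shows "relp S g h permutes S"
proof (rule bij_imp_permutes)
  have "bij_betw (inv_into S h) F S" using assms(2) by (rule bij_betw_inv_into)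
  hence "bij_betw (inv_into S h \<circ> g) S S" using assms(1) by (rule bij_betw_trans[rotated])
  thus "bij_betw (relp S g h) S S"
    by (rule bij_betw_cong[THEN iffD1, rotated]) (simp add: relp_def)
qed (simp add: relp_def)

lemma lem_noninj:
  assumes fin: "finite S" and ni: "\<not> inj_on g S"
  shows "(\<Sum>p\<in>{p. p permutes S}. of_int (sign p) * (\<Prod>i\<in>S. Mi (g i) i * cnj (Mi (g i) (p i)))) = (0::complex)"
proof -
  obtain a b where ab: "a \<in> S" "b \<in> S" "a \<noteq> b" "g a = g b" using ni unfolding inj_on_def by blast
  define t where "t = Transposition.transpose a b"
  define W where "W p = of_int (sign p) * (\<Prod>i\<in>S. Mi (g i) i * cnj (Mi (g i) (p i)))" for p
  have tt: "t \<circ> t = id" unfolding t_def by (rule transpose_comp_involutory)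
  have tp: "t permutes S" unfolding t_def using ab by (simp add: permutes_swap_id)
  have gt: "g (t i) = g i" for i using ab(4) unfolding t_def by (auto simp: transpose_def)
  have "sum W {p. p permutes S} = sum (\<lambda>p. W (p \<circ> t)) {p. p permutes S}"
    by (rule sum.reindex_bij_witness[where i="\<lambda>p. p \<circ> t" and j="\<lambda>p. p \<circ> t"])
       (use tt tp in \<open>auto simp: comp_assoc intro: permutes_compose\<close>)
  also have "\<dots> = sum (\<lambda>p. - W p) {p. p permutes S}"
  proof (rule sum.cong[OF refl])
    fix p assume "p \<in> {p. p permutes S}"
    hence pp: "p permutes S" by simp
    have s: "sign (p \<circ> t) = - sign p"
      using pp tp fin ab(3) by (simp add: sign_compose permutes_imp_permutation t_def sign_swap_id)
    have "(\<Prod>i\<in>S. Mi (g i) i * cnj (Mi (g i) ((p \<circ> t) i))) = (\<Prod>i\<in>S. Mi (g i) i * cnj (Mi (g i) (p i)))"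
    proof -
      have "(\<Prod>i\<in>S. Mi (g i) i * cnj (Mi (g i) ((p \<circ> t) i))) =
            (\<Prod>i\<in>S. Mi (g i) i) * (\<Prod>i\<in>S. cnj (Mi (g (t i)) (p (t i))))"
        by (simp add: prod.distrib gt)
      also have "(\<Prod>i\<in>S. cnj (Mi (g (t i)) (p (t i)))) = (\<Prod>i\<in>S. cnj (Mi (g i) (p i)))"
        using prod.permute[OF tp, of "\<lambda>i. cnj (Mi (g i) (p i))"] by (simp add: comp_def)
      finally show ?thesis by (simp add: prod.distrib)
    qed
    thus "W (p \<circ> t) = - W p" unfolding W_def s by simp
  qed
  finally have "sum W {p. p permutes S} = - sum W {p. p permutes S}" by (simp add: sum_negf)
  thus ?thesis unfolding W_def by simp
qed

lemma lem_inj: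
  assumes fin: "finite S" and inj: "inj_on g S"
  shows "(\<Sum>p\<in>{p. p permutes S}. of_int (sign p) * (\<Prod>i\<in>S. Mi (g i) i * cnj (Mi (g i) (p i))))
         = (\<Sum>h\<in>Bj S (g ` S). qterm S g h)"
proof -
  define hp where "hp p = (\<lambda>x. if x \<in> S then g (inv p x) else undefined)" for p :: "'a \<Rightarrow> 'a"
  have gb: "bij_betw g S (g ` S)" using inj by (simp add: inj_on_imp_bij_betw)
  show ?thesis
  proof (rule sum.reindex_bij_witness[where j = hp and i = "relp S g"])
    fix p assume "p \<in> {p. p permutes S}"
    hence pp: "p permutes S" by simp
    have ip: "inv p permutes S" using pp by (rule permutes_inv)
    have hpS: "x \<in> S \<Longrightarrow> hp p x = g (inv p x)" for x by (simp add: hp_def)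
    have bi: "bij_betw (hp p) S (g ` S)"
    proof -
      have "bij_betw (g \<circ> inv p) S (g ` S)"
        using permutes_imp_bij[OF ip] gb by (rule bij_betw_trans)
      thus ?thesis by (rule bij_betw_cong[THEN iffD1, rotated]) (simp add: hp_def)
    qed
    show "hp p \<in> Bj S (g ` S)" using bi by (auto simp: Bj_def hp_def extensional_def)
    show "relp S g (hp p) = p"
    proof
      fix x show "relp S g (hp p) x = p x"
      proof (cases "x \<in> S")
        case True
        have px: "p x \<in> S" using pp True by (simp add: permutes_in_image)
        have "hp p (p x) = g x" using px by (simp add: hpS permutes_inverses(2)[OF pp])
        hence "inv_into S (hp p) (g x) = p x"
          using bi px by (metis bij_betw_def inv_into_f_eq)
        thus ?thesis using True by (simp add: relp_def)
      next
        case False thus ?thesis using pp by (simp add: relp_def permutes_not_in)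
      qed
    qed
    have "(\<Prod>i\<in>S. cnj (Mi (hp p i) i)) = (\<Prod>i\<in>S. cnj (Mi (hp p (p i)) (p i)))"
      using prod.permute[OF pp, of "\<lambda>i. cnj (Mi (hp p i) i)"] by (simp add: comp_def)
    also have "\<dots> = (\<Prod>i\<in>S. cnj (Mi (g i) (p i)))"
      by (rule prod.cong[OF refl]) (simp add: hpS permutes_in_image[OF pp] permutes_inverses(2)[OF pp])
    finally have "(\<Prod>i\<in>S. cnj (Mi (hp p i) i)) = (\<Prod>i\<in>S. cnj (Mi (g i) (p i)))" .
    thus "qterm S g (hp p) = of_int (sign p) * (\<Prod>i\<in>S. Mi (g i) i * cnj (Mi (g i) (p i)))"
      unfolding qterm_def \<open>relp S g (hp p) = p\<close> by (simp add: prod.distrib)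
  next
    fix h assume "h \<in> Bj S (g ` S)"
    hence hb: "bij_betw h S (g ` S)" and he: "h \<in> extensional S" by (auto simp: Bj_def)
    have rp: "relp S g h permutes S" using gb hb by (rule relp_permutes)
    thus "relp S g h \<in> {p. p permutes S}" by simp
    show "hp (relp S g h) = h"
    proof
      fix x show "hp (relp S g h) x = h x"
      proof (cases "x \<in> S")
        case True
        define y where "y = inv (relp S g h) x"
        have yS: "y \<in> S" using True permutes_in_image[OF permutes_inv[OF rp]] by (simp add: y_def)
        have "relp S g h y = x" unfolding y_def using rp by (simp add: permutes_inverses(1))
        hence "inv_into S h (g y) = x" using yS by (simp add: relp_def)
        moreover have "g y \<in> h ` S" using hb yS by (auto simp: bij_betw_def)
        ultimately have "h x = g y" by (metis f_inv_into_f)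
        thus ?thesis using True by (simp add: hp_def y_def)
      next
        case False thus ?thesis using he by (simp add: hp_def extensional_def)
      qed
    qed
  qed
qed

lemma qterm_zero1:
  assumes "finite S" "g \<in> Bj S F - VB S F"
  shows "qterm S g h = 0"
proof -
  obtain i where "i \<in> S" "fst (g i) \<noteq> i" "snd (g i) \<noteq> i" using assms(2) by (auto simp: Bj_def VB_def)
  hence "Mi (g i) i = 0" by (simp add: Mi_def)
  hence "(\<Prod>i\<in>S. Mi (g i) i * cnj (Mi (h i) i)) = 0"
    by (intro prod_zero[OF assms(1)] bexI[of _ i]) (use \<open>i \<in> S\<close> in auto)
  thus ?thesis unfolding qterm_def by simp
qed

lemma qterm_zero2:
  assumes "finite S" "h \<in> Bj S F - VB S F"
  shows "qterm S g h = 0"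
proof -
  obtain i where "i \<in> S" "fst (h i) \<noteq> i" "snd (h i) \<noteq> i" using assms(2) by (auto simp: Bj_def VB_def)
  hence "Mi (h i) i = 0" by (simp add: Mi_def)
  hence "(\<Prod>i\<in>S. Mi (g i) i * cnj (Mi (h i) i)) = 0"
    by (intro prod_zero[OF assms(1)] bexI[of _ i]) (use \<open>i \<in> S\<close> in auto)
  thus ?thesis unfolding qterm_def by simp
qed

lemma Bj_Q:
  assumes "finite S" "finite F"
  shows "(\<Sum>g\<in>Bj S F. \<Sum>h\<in>Bj S F. qterm S g h) = Q S F"
proof -
  have "(\<Sum>g\<in>Bj S F. \<Sum>h\<in>Bj S F. qterm S g h) = (\<Sum>g\<in>Bj S F. \<Sum>h\<in>VB S F. qterm S g h)"
    by (rule sum.cong[OF refl], rule sum.mono_neutral_right)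
       (use assms in \<open>auto simp: finite_Bj VB_sub_Bj qterm_zero2\<close>)
  also have "\<dots> = Q S F" unfolding Q_def
    by (rule sum.mono_neutral_right) (use assms in \<open>auto simp: finite_Bj VB_sub_Bj qterm_zero1\<close>)
  finally show ?thesis .
qed

lemma CB:
  assumes fS: "finite S" and fE: "finite E"
  shows "(\<Sum>p\<in>{p. p permutes S}. of_int (sign p) * (\<Prod>i\<in>S. \<Sum>e\<in>E. Mi e i * cnj (Mi e (p i))))
     = (\<Sum>F\<in>{F. F \<subseteq> E \<and> card F = card S}. Q S F)"
proof -
  define P where "P = PiE S (\<lambda>_. E)"
  define I where "I = {g\<in>P. inj_on g S}"
  define Fs where "Fs = {F. F \<subseteq> E \<and> card F = card S}"
  have fP: "finite P" unfolding P_def using fS fE by (simp add: finite_PiE)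
  have fI: "finite I" unfolding I_def using fP by simp
  have fFs: "finite Fs" unfolding Fs_def using fE by simp
  have "(\<Sum>p\<in>{p. p permutes S}. of_int (sign p) * (\<Prod>i\<in>S. \<Sum>e\<in>E. Mi e i * cnj (Mi e (p i))))
     = (\<Sum>p\<in>{p. p permutes S}. of_int (sign p) * (\<Sum>g\<in>P. \<Prod>i\<in>S. Mi (g i) i * cnj (Mi (g i) (p i))))"
    unfolding P_def by (subst prod_sum_PiE) (use fS fE in auto)
  also have "\<dots> = (\<Sum>g\<in>P. \<Sum>p\<in>{p. p permutes S}. of_int (sign p) * (\<Prod>i\<in>S. Mi (g i) i * cnj (Mi (g i) (p i))))"
    by (simp add: sum_distrib_left sum.swap[of _ _ P])
  also have "\<dots> = (\<Sum>g\<in>P. if inj_on g S then (\<Sum>h\<in>Bj S (g ` S). qterm S g h) else 0)"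
    by (rule sum.cong[OF refl]) (simp add: lem_inj lem_noninj fS)
  also have "\<dots> = (\<Sum>g\<in>I. \<Sum>h\<in>Bj S (g ` S). qterm S g h)"
    unfolding I_def by (simp add: sum.inter_filter[OF fP, symmetric])
  also have "\<dots> = (\<Sum>F\<in>Fs. \<Sum>g\<in>{g\<in>I. g ` S = F}. \<Sum>h\<in>Bj S (g ` S). qterm S g h)"
  proof (rule sum.group[symmetric, OF fI fFs])
    show "(\<lambda>g. g ` S) ` I \<subseteq> Fs"
      by (auto simp: I_def P_def Fs_def card_image PiE_iff)
  qed
  also have "\<dots> = (\<Sum>F\<in>Fs. \<Sum>g\<in>Bj S F. \<Sum>h\<in>Bj S F. qterm S g h)"
  proof (rule sum.cong[OF refl])
    fix F assume "F \<in> Fs"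
    hence FE: "F \<subseteq> E" by (simp add: Fs_def)
    have "{g\<in>I. g ` S = F} = Bj S F"
      using FE by (auto simp: I_def P_def Bj_def PiE_iff bij_betw_def)
    thus "(\<Sum>g\<in>{g\<in>I. g ` S = F}. \<Sum>h\<in>Bj S (g ` S). qterm S g h) = (\<Sum>g\<in>Bj S F. \<Sum>h\<in>Bj S F. qterm S g h)"
      by (auto intro!: sum.cong)
  qed
  also have "\<dots> = (\<Sum>F\<in>Fs. Q S F)"
    by (rule sum.cong[OF refl], rule Bj_Q[OF fS]) (use fE in \<open>auto simp: Fs_def intro: finite_subset\<close>)
  finally show ?thesis unfolding Fs_def .
qed

lemma Lmat_sum:
  assumes og: "oriented_graph V E" and uV: "u \<in> V" and vV: "v \<in> V"
  shows "Lmat omega5 E u v = (\<Sum>e\<in>E. Mi e u * cnj (Mi e v))"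
proof -
  have nl: "fst e \<noteq> snd e" if "e \<in> E" for e using og that by (cases e) (auto simp: oriented_graph_def)
  have fE: "finite E" using og by (auto simp: oriented_graph_def intro: finite_subset)
  show ?thesis
  proof (cases "u = v")
    case True
    have "(\<Sum>e\<in>E. Mi e u * cnj (Mi e v)) = (\<Sum>e\<in>E. if fst e = u \<or> snd e = u then 1 else 0)"
      using True by (intro sum.cong[OF refl]) (simp add: Mi_norm nl)
    also have "\<dots> = of_nat (card {e \<in> E. fst e = u \<or> snd e = u})"
      by (simp add: sum.inter_filter[OF fE, symmetric])
    finally show ?thesis using True by (simp add: Lmat_def)
  next
    case False
    have "(\<Sum>e\<in>E. Mi e u * cnj (Mi e v)) =
          (\<Sum>e\<in>E. (if e = (u, v) then - omega5 else 0) + (if e = (v, u) then - cnj omega5 else 0))"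
      using False by (intro sum.cong[OF refl]) (auto simp: Mi_def nl)
    also have "\<dots> = (if (u, v) \<in> E then - omega5 else 0) + (if (v, u) \<in> E then - cnj omega5 else 0)"
      by (simp add: sum.distrib fE)
    finally show ?thesis using False og by (auto simp: Lmat_def oriented_graph_def)
  qed
qed

lemma Q_empty: "Q ({}::'a set) {} = 1"
proof -
  have "VB ({}::'a set) {} = {(\<lambda>_. undefined)}" by (auto simp: VB_def extensional_def bij_betw_def)
  moreover have "relp ({}::'a set) (\<lambda>_. undefined) (\<lambda>_. undefined) = id" by (auto simp: relp_def)
  ultimately show ?thesis by (simp add: Q_def qterm_def)
qed

lemma Q_noarc:
  assumes "v \<in> S" "\<forall>e\<in>F. fst e \<noteq> v \<and> snd e \<noteq> v"
  shows "Q S F = 0"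
proof -
  have "VB S F = {}"
  proof (rule ccontr)
    assume "VB S F \<noteq> {}"
    then obtain g where g: "g \<in> VB S F" by auto
    hence "g v \<in> F" "fst (g v) = v \<or> snd (g v) = v" using assms(1)
      by (auto simp: VB_def bij_betw_def)
    thus False using assms(2) by auto
  qed
  thus ?thesis by (simp add: Q_def)
qed

lemma relp_self: "inj_on g S \<Longrightarrow> relp S g g = id"
  by (auto simp: relp_def)

lemma Q_single:
  assumes "fst e \<noteq> snd e" "v = fst e \<or> v = snd e"
  shows "Q {v} {e} = 1"
proof -
  have "VB {v} {e} = {(\<lambda>x. if x = v then e else undefined)}"
    using assms(2) by (auto simp: VB_def extensional_def bij_betw_def)
  moreover have "relp {v} g g = id" for g by (rule relp_self) simp
  ultimately show ?thesis using Mi_norm[OF assms(1), of v] assms(2) by (auto simp: Q_def qterm_def)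
qed

lemma inv_into_eqI: "inj_on k S \<Longrightarrow> y \<in> S \<Longrightarrow> k y = z \<Longrightarrow> inv_into S k z = y"
  by (rule inv_into_f_eq)

lemma sum_pair: "(\<Sum>p\<in>A\<times>B. H p) = (\<Sum>u\<in>A. \<Sum>v\<in>B. H (u, v))"
  by (simp add: sum.cartesian_product)
lemma sum4:
  fixes f g :: "'a \<Rightarrow> 'a \<Rightarrow> 'c::comm_semiring_1"
  shows "(\<Sum>p\<in>A\<times>B. \<Sum>q\<in>A\<times>B. f (fst p) (fst q) * g (snd p) (snd q)) = (\<Sum>x\<in>A. \<Sum>y\<in>A. f x y) * (\<Sum>x\<in>B. \<Sum>y\<in>B. g x y)"
proof -
  have "(\<Sum>p\<in>A\<times>B. \<Sum>q\<in>A\<times>B. f (fst p) (fst q) * g (snd p) (snd q))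
      = (\<Sum>p\<in>A\<times>B. \<Sum>x\<in>A. \<Sum>y\<in>B. f (fst p) x * g (snd p) y)"
    by (simp only: sum_pair fst_conv snd_conv)
  also have "\<dots> = (\<Sum>u\<in>A. \<Sum>v\<in>B. \<Sum>x\<in>A. \<Sum>y\<in>B. f u x * g v y)"
    by (simp only: sum_pair fst_conv snd_conv)
  also have "\<dots> = (\<Sum>u\<in>A. \<Sum>v\<in>B. (\<Sum>x\<in>A. f u x) * (\<Sum>y\<in>B. g v y))"
    by (simp add: sum_product)
  also have "\<dots> = (\<Sum>u\<in>A. (\<Sum>x\<in>A. f u x)) * (\<Sum>v\<in>B. (\<Sum>y\<in>B. g v y))"
    by (simp add: sum_product)
  finally show ?thesis .
qed

lemma Q_split:
  assumes fS1: "finite S1" and fS2: "finite S2" and fF1: "finite F1" and fF2: "finite F2"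
    and dS: "S1 \<inter> S2 = {}" and dF: "F1 \<inter> F2 = {}" and cS: "card S1 = card F1"
    and hyp: "\<forall>g\<in>VB (S1 \<union> S2) (F1 \<union> F2). g ` S1 \<subseteq> F1"
  shows "Q (S1 \<union> S2) (F1 \<union> F2) = Q S1 F1 * Q S2 F2"
proof -
  define S where "S = S1 \<union> S2"
  define F where "F = F1 \<union> F2"
  define psi where "psi = (\<lambda>(g1, g2). (\<lambda>x. if x \<in> S1 then g1 x else g2 x) :: 'a \<Rightarrow> 'a \<times> 'a)"
  have psi_app: "psi (g1, g2) x = (if x \<in> S1 then g1 x else g2 x)" for g1 g2 x by (simp add: psi_def)
  have psi_in: "psi (g1, g2) \<in> VB S F" if g1: "g1 \<in> VB S1 F1" and g2: "g2 \<in> VB S2 F2" for g1 g2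
  proof -
    have b1: "bij_betw g1 S1 F1" and b2: "bij_betw g2 S2 F2" using g1 g2 by (auto simp: VB_def)
    have e2: "g2 \<in> extensional S2" using g2 by (auto simp: VB_def)
    have "bij_betw (psi (g1, g2)) S F"
      unfolding S_def F_def psi_app using b1 b2 dS dF by (rule bij_betw_disjoint_Un)
    moreover have "psi (g1, g2) \<in> extensional S" using e2 g1 by (auto simp: psi_def S_def extensional_def VB_def)
    moreover have "\<forall>i\<in>S. fst (psi (g1, g2) i) = i \<or> snd (psi (g1, g2) i) = i"
      using g1 g2 by (auto simp: psi_def S_def VB_def)
    ultimately show ?thesis by (simp add: VB_def)
  qed
  have bij: "bij_betw psi (VB S1 F1 \<times> VB S2 F2) (VB S F)"
  proof (rule bij_betwI')
    fix p q assume "p \<in> VB S1 F1 \<times> VB S2 F2" "q \<in> VB S1 F1 \<times> VB S2 F2"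
    then obtain g1 g2 h1 h2 where pq: "p = (g1, g2)" "q = (h1, h2)" "g1 \<in> VB S1 F1" "g2 \<in> VB S2 F2"
        "h1 \<in> VB S1 F1" "h2 \<in> VB S2 F2" by auto
    show "(psi p = psi q) = (p = q)"
    proof
      assume eq: "psi p = psi q"
      have "g1 = h1"
      proof
        fix x show "g1 x = h1 x"
          using fun_cong[OF eq, of x] pq by (cases "x \<in> S1") (auto simp: psi_def VB_def extensional_def)
      qed
      moreover have "g2 = h2"
      proof
        fix x show "g2 x = h2 x"
          using fun_cong[OF eq, of x] pq dS by (cases "x \<in> S2"; cases "x \<in> S1") (auto simp: psi_def VB_def extensional_def)
      qed
      ultimately show "p = q" using pq by simp
    qed simp
  next
    fix p assume "p \<in> VB S1 F1 \<times> VB S2 F2"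
    thus "psi p \<in> VB S F" using psi_in by auto
  next
    fix g assume g: "g \<in> VB S F"
    have bg: "bij_betw g S F" and eg: "g \<in> extensional S" and vg: "\<forall>i\<in>S. fst (g i) = i \<or> snd (g i) = i"
      using g by (auto simp: VB_def)
    have ig: "inj_on g S" using bg by (simp add: bij_betw_def)
    have sub: "g ` S1 \<subseteq> F1" using hyp g by (simp add: S_def F_def)
    have im1: "g ` S1 = F1"
      by (rule card_subset_eq[OF fF1 sub]) (metis card_image cS ig inj_on_subset S_def sup_ge1)
    have im2: "g ` S2 = F2"
    proof -
      have "g ` S = F" using bg by (simp add: bij_betw_def)
      moreover have "g ` S1 \<inter> g ` S2 = {}" using ig dS unfolding S_def
        by (metis image_Int image_empty inj_on_Un_image_eq_iff inj_on_image_Int sup_ge1 sup_ge2 subset_refl)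
      ultimately have e: "g ` S1 \<union> g ` S2 = g ` S1 \<union> F2" and d: "g ` S1 \<inter> g ` S2 = {}"
        and d2: "g ` S1 \<inter> F2 = {}" using im1 dF unfolding S_def F_def image_Un by auto
      have "F2 = (g ` S1 \<union> F2) - g ` S1" using d2 by blast
      also have "\<dots> = (g ` S1 \<union> g ` S2) - g ` S1" using e by simp
      also have "\<dots> = g ` S2" using d by blast
      finally show ?thesis by simp
    qed
    define g1 where "g1 = restrict g S1"
    define g2 where "g2 = restrict g S2"
    have "g1 \<in> VB S1 F1"
      unfolding VB_def g1_def using vg im1 ig
      by (auto simp: S_def intro!: bij_betw_imageI inj_on_subset[OF ig] cong: bij_betw_cong)
    moreover have "g2 \<in> VB S2 F2"
      unfolding VB_def g2_def using vg im2 ig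
      by (auto simp: S_def intro!: bij_betw_imageI inj_on_subset[OF ig] cong: bij_betw_cong)
    moreover have "psi (g1, g2) = g"
    proof
      fix x show "psi (g1, g2) x = g x"
        using eg by (auto simp: psi_def g1_def g2_def S_def extensional_def)
    qed
    ultimately show "\<exists>p\<in>VB S1 F1 \<times> VB S2 F2. g = psi p" by (metis SigmaI)
  qed
  have qt: "qterm S (psi (g1, g2)) (psi (h1, h2)) = qterm S1 g1 h1 * qterm S2 g2 h2"
    if g1: "g1 \<in> VB S1 F1" and g2: "g2 \<in> VB S2 F2" and h1: "h1 \<in> VB S1 F1" and h2: "h2 \<in> VB S2 F2"
    for g1 g2 h1 h2
  proof -
    have bg1: "bij_betw g1 S1 F1" and bg2: "bij_betw g2 S2 F2" and bh1: "bij_betw h1 S1 F1"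
      and bh2: "bij_betw h2 S2 F2" using g1 g2 h1 h2 by (auto simp: VB_def)
    have pg: "psi (g1, g2) \<in> VB S F" and ph: "psi (h1, h2) \<in> VB S F" using psi_in g1 g2 h1 h2 by auto
    have iph: "inj_on (psi (h1, h2)) S" using ph by (auto simp: VB_def bij_betw_def)
    have rel: "relp S (psi (g1, g2)) (psi (h1, h2)) = relp S1 g1 h1 \<circ> relp S2 g2 h2"
    proof
      fix x
      show "relp S (psi (g1, g2)) (psi (h1, h2)) x = (relp S1 g1 h1 \<circ> relp S2 g2 h2) x"
      proof (cases "x \<in> S1")
        case True
        have gx: "g1 x \<in> h1 ` S1" using bg1 bh1 True by (auto simp: bij_betw_def)
        define y where "y = inv_into S1 h1 (g1 x)"
        have yS: "y \<in> S1" using gx by (simp add: y_def inv_into_into)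
        have hy: "h1 y = g1 x" using gx by (simp add: y_def f_inv_into_f)
        have "inv_into S (psi (h1, h2)) (g1 x) = y"
          by (rule inv_into_eqI[OF iph]) (use yS hy in \<open>auto simp: S_def psi_def\<close>)
        thus ?thesis using True dS by (auto simp: relp_def S_def psi_def y_def)
      next
        case False
        show ?thesis
        proof (cases "x \<in> S2")
          case True
          have gx: "g2 x \<in> h2 ` S2" using bg2 bh2 True by (auto simp: bij_betw_def)
          define y where "y = inv_into S2 h2 (g2 x)"
          have yS: "y \<in> S2" using gx by (simp add: y_def inv_into_into)
          have hy: "h2 y = g2 x" using gx by (simp add: y_def f_inv_into_f)
          have yS1: "y \<notin> S1" using yS dS by auto
          have "inv_into S (psi (h1, h2)) (g2 x) = y"
            by (rule inv_into_eqI[OF iph]) (use yS yS1 hy in \<open>auto simp: S_def psi_def\<close>)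
          thus ?thesis using True False yS1 by (auto simp: relp_def S_def psi_def y_def)
        next
          case False2: False
          thus ?thesis using False by (simp add: relp_def S_def)
        qed
      qed
    qed
    have p1: "permutation (relp S1 g1 h1)"
      using relp_permutes[OF bg1 bh1] fS1 by (rule permutes_imp_permutation[rotated])
    have p2: "permutation (relp S2 g2 h2)"
      using relp_permutes[OF bg2 bh2] fS2 by (rule permutes_imp_permutation[rotated])
    have "(\<Prod>i\<in>S. Mi (psi (g1, g2) i) i * cnj (Mi (psi (h1, h2) i) i))
        = (\<Prod>i\<in>S1. Mi (psi (g1, g2) i) i * cnj (Mi (psi (h1, h2) i) i)) *
          (\<Prod>i\<in>S2. Mi (psi (g1, g2) i) i * cnj (Mi (psi (h1, h2) i) i))"
      unfolding S_def by (rule prod.union_disjoint[OF fS1 fS2 dS])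
    also have "\<dots> = (\<Prod>i\<in>S1. Mi (g1 i) i * cnj (Mi (h1 i) i)) * (\<Prod>i\<in>S2. Mi (g2 i) i * cnj (Mi (h2 i) i))"
      using dS by (auto simp: psi_def intro!: prod.cong arg_cong2[where f = "(*)"])
    finally show ?thesis
      unfolding qterm_def rel sign_compose[OF p1 p2] by (simp add: algebra_simps)
  qed
  have fV1: "finite (VB S1 F1)" and fV2: "finite (VB S2 F2)" using fS1 fS2 fF1 fF2 by (auto simp: finite_VB)
  have "Q S F = (\<Sum>p\<in>VB S1 F1 \<times> VB S2 F2. \<Sum>q\<in>VB S1 F1 \<times> VB S2 F2. qterm S (psi p) (psi q))"
    unfolding Q_def
    by (simp add: sum.reindex_bij_betw[OF bij, symmetric])
  also have "\<dots> = (\<Sum>p\<in>VB S1 F1 \<times> VB S2 F2. \<Sum>q\<in>VB S1 F1 \<times> VB S2 F2.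
       qterm S1 (fst p) (fst q) * qterm S2 (snd p) (snd q))"
    by (intro sum.cong refl) (auto simp: qt)
  also have "\<dots> = Q S1 F1 * Q S2 F2"
    unfolding Q_def by (rule sum4)
  finally show ?thesis by (simp add: S_def F_def)
qed

definition phi :: real where "phi = (1 + sqrt 5) / 2"

definition Wt :: "nat \<Rightarrow> nat \<Rightarrow> real" where
  "Wt a b = sqrt 5 ^ (a + b) * phi powi (int a - int b)"

definition T :: "'a set \<Rightarrow> ('a \<times> 'a) set \<Rightarrow> real" where
  "T S F = (if all_regular S F then delta0 (n_van S F) * Wt (n_alpha S F) (n_beta S F) else 0)"

definition tfac :: "'a set \<Rightarrow> ('a \<times> 'a) set \<Rightarrow> real" where
  "tfac C A = (if card C = card A \<and> \<not> vanishing_comp C A then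
     (if alpha_comp C A then sqrt 5 * phi else 1) * (if beta_comp C A then sqrt 5 / phi else 1) else 0)"

lemma phi_pos: "phi > 0" by (simp add: phi_def add_pos_nonneg)

lemma Wt_Suc1: "Wt (Suc a) b = Wt a b * (sqrt 5 * phi)"
proof -
  have "phi powi (int (Suc a) - int b) = phi powi ((int a - int b) + 1)" by (simp add: algebra_simps)
  also have "\<dots> = phi powi (int a - int b) * phi" using phi_pos by (simp add: power_int_add)
  finally show ?thesis by (simp add: Wt_def algebra_simps)
qed

lemma Wt_Suc2: "Wt a (Suc b) = Wt a b * (sqrt 5 / phi)"
proof -
  have "phi powi (int a - int (Suc b)) = phi powi ((int a - int b) + (-1))" by (simp add: algebra_simps)
  also have "\<dots> = phi powi (int a - int b) * phi powi (-1)" using phi_pos by (intro power_int_add) simp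
  also have "\<dots> = phi powi (int a - int b) / phi" by (simp add: power_int_minus field_simps)
  finally show ?thesis by (simp add: Wt_def algebra_simps)
qed

lemma sub_adj_sym: "(x, y) \<in> sub_adj S F \<Longrightarrow> (y, x) \<in> sub_adj S F"
  by (auto simp: sub_adj_def)

lemma sub_adj_SS: "(x, y) \<in> sub_adj S F \<Longrightarrow> x \<in> S \<and> y \<in> S"
  by (auto simp: sub_adj_def)

lemma sym_sub_adj: "sym (sub_adj S F)"
  by (auto simp: sym_def sub_adj_def)

lemma sub_conn_equiv: "equiv S (sub_conn S F)"
proof -
  have s: "sym ((sub_adj S F)\<^sup>*)" using sym_sub_adj by (rule sym_rtrancl)
  show ?thesis
    unfolding equiv_def refl_on_def sym_def trans_def sub_conn_def
    using s by (auto simp: sym_def intro: rtrancl_trans)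
qed

lemma sub_conn_iff: "(x, y) \<in> sub_conn S F \<longleftrightarrow> x \<in> S \<and> y \<in> S \<and> (x, y) \<in> (sub_adj S F)\<^sup>*"
  by (simp add: sub_conn_def)

lemma comps_finite: "finite S \<Longrightarrow> finite (components S F)"
  unfolding components_def by (rule finite_quotient) (auto simp: sub_conn_def)

lemma card_filter_insert:
  assumes "finite X" "C \<notin> X" "\<forall>D\<in>X. g D = g' D"
  shows "card {D \<in> insert C X. P D (g D)} = card {D \<in> X. P D (g' D)} + (if P C (g C) then 1 else 0)"
proof -
  have e: "{D \<in> X. P D (g D)} = {D \<in> X. P D (g' D)}" using assms(3) by auto
  show ?thesis
  proof (cases "P C (g C)")
    case True
    hence "{D \<in> insert C X. P D (g D)} = insert C {D \<in> X. P D (g D)}" by auto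
    thus ?thesis using assms(1,2) e True by simp
  next
    case False
    hence "{D \<in> insert C X. P D (g D)} = {D \<in> X. P D (g D)}" by auto
    thus ?thesis using e False by simp
  qed
qed

lemma comp_remove:
  assumes C: "C \<in> components S F"
  shows "components (S - C) (F - comp_arcs F C) = components S F - {C}"
    and "\<forall>D \<in> components (S - C) (F - comp_arcs F C). comp_arcs (F - comp_arcs F C) D = comp_arcs F D"
proof -
  define R where "R = sub_conn S F"
  define S' where "S' = S - C"
  define F' where "F' = F - comp_arcs F C"
  define R' where "R' = sub_conn S' F'"
  have eq: "equiv S R" unfolding R_def by (rule sub_conn_equiv)
  obtain c where cS: "c \<in> S" and Cc: "C = R `` {c}" using C unfolding components_def R_def by (auto elim: quotientE)
  have CS: "C \<subseteq> S" using Cc eq by (auto simp: R_def sub_conn_def)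
  have claim1: "y \<notin> C" if "(x, y) \<in> R" "x \<notin> C" for x y
  proof
    assume "y \<in> C"
    hence "(c, y) \<in> R" using Cc by simp
    hence "(c, x) \<in> R" using that(1) eq by (meson equiv_def sym_def trans_def)
    thus False using that(2) Cc by simp
  qed
  have step: "z \<in> S' \<and> (x, z) \<in> (sub_adj S' F')\<^sup>*" if "(x, z) \<in> (sub_adj S F)\<^sup>*" "x \<in> S'" for x z
    using that(1)
  proof (induction rule: rtrancl_induct)
    case base thus ?case using that(2) by simp
  next
    case (step y z)
    have zS: "z \<in> S" and yS: "y \<in> S" using step(2) by (auto simp: sub_adj_def)
    have "(x, z) \<in> R" using step(1,2) that(2) zS by (auto simp: R_def sub_conn_def S'_def)
    hence zC: "z \<notin> C" using claim1 that(2) by (auto simp: S'_def)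
    have yC: "y \<notin> C" using step(3) by (simp add: S'_def)
    have "(y, z) \<in> sub_adj S' F'"
      using step(2) yC zC by (auto simp: sub_adj_def S'_def F'_def comp_arcs_def)
    thus ?case using step(3) zS zC by (auto simp: S'_def)
  qed
  have R'eq: "R' = R \<inter> (S' \<times> S')"
  proof
    have "sub_adj S' F' \<subseteq> sub_adj S F" by (auto simp: sub_adj_def S'_def F'_def)
    hence "(sub_adj S' F')\<^sup>* \<subseteq> (sub_adj S F)\<^sup>*" by (rule rtrancl_mono)
    thus "R' \<subseteq> R \<inter> (S' \<times> S')" by (auto simp: R'_def R_def sub_conn_def S'_def)
  next
    show "R \<inter> (S' \<times> S') \<subseteq> R'" using step by (auto simp: R'_def R_def sub_conn_def)
  qed
  have img: "R' `` {x} = R `` {x}" if "x \<in> S'" for x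
  proof
    show "R' `` {x} \<subseteq> R `` {x}" using R'eq by auto
    show "R `` {x} \<subseteq> R' `` {x}"
    proof
      fix y assume "y \<in> R `` {x}"
      hence "(x, y) \<in> R" by simp
      moreover have "y \<in> S" using \<open>(x, y) \<in> R\<close> by (auto simp: R_def sub_conn_def)
      moreover have "y \<notin> C" using claim1 \<open>(x, y) \<in> R\<close> that by (auto simp: S'_def)
      ultimately show "y \<in> R' `` {x}" using R'eq that by (auto simp: S'_def)
    qed
  qed
  have xin: "x \<in> R `` {x}" if "x \<in> S" for x using eq that by (auto simp: equiv_def refl_on_def)
  show comps: "components (S - C) (F - comp_arcs F C) = components S F - {C}"
  proof
    show "components (S - C) (F - comp_arcs F C) \<subseteq> components S F - {C}"
    proof
      fix D assume "D \<in> components (S - C) (F - comp_arcs F C)"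
      then obtain x where x: "x \<in> S'" "D = R' `` {x}"
        unfolding components_def R'_def S'_def F'_def by (auto elim: quotientE)
      hence "D = R `` {x}" using img by simp
      moreover have "x \<in> S" "x \<notin> C" using x by (auto simp: S'_def)
      ultimately show "D \<in> components S F - {C}"
        using xin unfolding components_def R_def[symmetric] by (auto intro: quotientI)
    qed
  next
    show "components S F - {C} \<subseteq> components (S - C) (F - comp_arcs F C)"
    proof
      fix D assume D: "D \<in> components S F - {C}"
      then obtain x where x: "x \<in> S" "D = R `` {x}" unfolding components_def R_def by (auto elim: quotientE)
      have "x \<notin> C"
      proof
        assume "x \<in> C"
        hence "(c, x) \<in> R" using Cc by simp
        hence "R `` {x} = R `` {c}" using eq by (simp add: equiv_class_eq)
        thus False using D x Cc by simp
      qed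
      hence "x \<in> S'" using x by (simp add: S'_def)
      hence "R' `` {x} \<in> S' // R'" by (rule quotientI)
      thus "D \<in> components (S - C) (F - comp_arcs F C)"
        using img[OF \<open>x \<in> S'\<close>] x unfolding components_def R'_def S'_def F'_def by simp
    qed
  qed
  show "\<forall>D \<in> components (S - C) (F - comp_arcs F C). comp_arcs (F - comp_arcs F C) D = comp_arcs F D"
  proof
    fix D assume "D \<in> components (S - C) (F - comp_arcs F C)"
    then obtain x where x: "x \<in> S'" "D = R `` {x}" using img
      unfolding components_def R'_def S'_def F'_def by (auto elim: quotientE)
    have DS: "D \<subseteq> S - C" using x claim1 by (auto simp: R_def sub_conn_def S'_def)
    have Dcl: "q \<in> D" if "p \<in> D" "(p, q) \<in> R" for p q
      using that x eq by (meson Image_singleton_iff equiv_def trans_def)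
    show "comp_arcs (F - comp_arcs F C) D = comp_arcs F D"
    proof
      show "comp_arcs (F - comp_arcs F C) D \<subseteq> comp_arcs F D" by (auto simp: comp_arcs_def)
      show "comp_arcs F D \<subseteq> comp_arcs (F - comp_arcs F C) D"
      proof
        fix a assume a: "a \<in> comp_arcs F D"
        have "a \<notin> comp_arcs F C"
        proof
          assume "a \<in> comp_arcs F C"
          then obtain p q where pq: "p \<in> D" "q \<in> C" "a = (p, q) \<or> a = (q, p)" "a \<in> F"
            using a DS by (cases a) (auto simp: comp_arcs_def)
          have "(p, q) \<in> sub_adj S F" using pq DS CS by (auto simp: sub_adj_def)
          hence "(p, q) \<in> R" using DS CS pq by (auto simp: R_def sub_conn_def)
          hence "q \<in> D" using Dcl pq by blast
          thus False using DS pq by auto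
        qed
        thus "a \<in> comp_arcs (F - comp_arcs F C) D" using a by (auto simp: comp_arcs_def)
      qed
    qed
  qed
qed

lemma T_remove:
  assumes fS: "finite S" and C: "C \<in> components S F"
  shows "T S F = tfac C (comp_arcs F C) * T (S - C) (F - comp_arcs F C)"
proof -
  define S' where "S' = S - C"
  define F' where "F' = F - comp_arcs F C"
  have cs: "components S F = insert C (components S' F')" and nin: "C \<notin> components S' F'"
    using comp_remove(1)[OF C] C by (auto simp: S'_def F'_def)
  have ca: "\<forall>D\<in>components S' F'. comp_arcs F' D = comp_arcs F D"
    using comp_remove(2)[OF C] by (simp add: S'_def F'_def)
  have ca': "\<forall>D\<in>components S' F'. comp_arcs F D = comp_arcs F' D" using ca by simp
  have fc: "finite (components S' F')" using fS by (simp add: comps_finite S'_def)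
  have ar: "all_regular S F \<longleftrightarrow> card C = card (comp_arcs F C) \<and> all_regular S' F'"
    unfolding all_regular_def cs using ca by auto
  have na: "n_alpha S F = n_alpha S' F' + (if alpha_comp C (comp_arcs F C) then 1 else 0)"
    unfolding n_alpha_def cs by (rule card_filter_insert[OF fc nin ca'])
  have nb: "n_beta S F = n_beta S' F' + (if beta_comp C (comp_arcs F C) then 1 else 0)"
    unfolding n_beta_def cs by (rule card_filter_insert[OF fc nin ca'])
  have nv: "n_van S F = n_van S' F' + (if vanishing_comp C (comp_arcs F C) then 1 else 0)"
    unfolding n_van_def cs by (rule card_filter_insert[OF fc nin ca'])
  show ?thesis
    unfolding T_def tfac_def ar na nb nv S'_def[symmetric] F'_def[symmetric]
    by (auto simp: delta0_def Wt_Suc1 Wt_Suc2 algebra_simps)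
qed

lemma pv_eq: fixes j k :: nat assumes "0 < k" "j < k"
  shows "(j + k - 1) mod k = (if j = 0 then k - 1 else j - 1)"
proof (cases "j = 0")
  case False
  have h: "j + k - 1 = (j - 1) + k" using False assms by linarith
  have "(j + k - 1) mod k = ((j - 1) + k) mod k" by (simp only: h)
  also have "\<dots> = (j - 1) mod k" by (simp only: mod_add_self2)
  also have "\<dots> = j - 1" using assms by simp
  finally show ?thesis using False by simp
qed (use assms in simp)
lemma nx_eq: fixes j k :: nat assumes "j < k" shows "(j + 1) mod k = (if j + 1 = k then 0 else j + 1)"
  using assms by (cases "j + 1 = k") auto
lemma mod_prev: fixes j k :: nat assumes "0 < k" "j < k" shows "((j + k - 1) mod k + 1) mod k = j"
proof -
  have a: "(j + k - 1) mod k < k" using assms by simp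
  show ?thesis using pv_eq[OF assms] nx_eq[OF a] assms by (auto split: if_splits)
qed
lemma mod_next_prev: fixes j k :: nat assumes "0 < k" "j < k" shows "((j + 1) mod k + k - 1) mod k = j"
proof -
  have a: "(j + 1) mod k < k" using assms by simp
  show ?thesis using pv_eq[OF assms(1) a] nx_eq[OF assms(2)] assms by (auto split: if_splits)
qed
lemma nx_ne: fixes j k :: nat assumes "3 \<le> k" "j < k" shows "(j + 1) mod k \<noteq> j"
  using nx_eq[OF assms(2)] assms by auto
lemma pv_ne: fixes j k :: nat assumes "3 \<le> k" "j < k" shows "(j + k - 1) mod k \<noteq> j"
  using pv_eq[of k j] assms by auto
lemma pv_ne_nx: fixes j k :: nat assumes "3 \<le> k" "j < k" shows "(j + k - 1) mod k \<noteq> (j + 1) mod k"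
  using pv_eq[of k j] nx_eq[OF assms(2)] assms by (auto split: if_splits)

lemma joined_sym: "joined A x y = joined A y x" by (auto simp: joined_def)

lemma cyc_next: "cycle_list A ws \<Longrightarrow> j < length ws \<Longrightarrow> joined A (ws ! j) (ws ! ((j + 1) mod length ws))"
  by (simp add: cycle_list_def)

lemma cyc_prev:
  assumes "cycle_list A ws" "j < length ws"
  shows "joined A (ws ! ((j + length ws - 1) mod length ws)) (ws ! j)"
proof -
  have k: "0 < length ws" by (rule le_less_trans[OF le0 assms(2)])
  have "(j + length ws - 1) mod length ws < length ws" using k by simp
  have e: "((j + length ws - 1) mod length ws + 1) mod length ws = j" by (rule mod_prev[OF k assms(2)])
  from cyc_next[OF assms(1) \<open>(j + length ws - 1) mod length ws < length ws\<close>] show ?thesis unfolding e .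
qed

lemma nx_mem: "j < length ws \<Longrightarrow> ws ! ((j + 1) mod length ws) \<in> set ws"
  by (rule nth_mem) (metis le_less_trans[OF le0] mod_less_divisor)

lemma nx_lt: "j < length ws \<Longrightarrow> (j + 1) mod length ws < length ws"
  by (metis le_less_trans[OF le0] mod_less_divisor)

lemma pv_lt: "j < length ws \<Longrightarrow> (j + length ws - 1) mod length ws < length ws"
  by (metis le_less_trans[OF le0] mod_less_divisor)

lemma leaf_nbr:
  assumes "e = (v, u) \<or> e = (u, v)" "u \<noteq> v" "\<forall>a\<in>A. fst a = v \<or> snd a = v \<longrightarrow> a = e"
    and "joined A v w"
  shows "w = u"
  using assms by (auto simp: joined_def)

lemma leaf_off_cycle:
  assumes "e = (v, u) \<or> e = (u, v)" "u \<noteq> v" "\<forall>a\<in>A. fst a = v \<or> snd a = v \<longrightarrow> a = e"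
    and cyc: "cycle_list A ws"
  shows "v \<notin> set ws"
proof
  assume "v \<in> set ws"
  then obtain j where j: "j < length ws" "ws ! j = v" by (auto simp: in_set_conv_nth)
  define k where "k = length ws"
  have k3: "3 \<le> k" and dist: "distinct ws" using cyc by (auto simp: cycle_list_def k_def)
  have "joined A v (ws ! ((j + 1) mod k))" using cyc_next[OF cyc j(1)] j by (simp add: k_def)
  hence n: "ws ! ((j + 1) mod k) = u" using leaf_nbr[OF assms(1-3)] by blast
  have "joined A v (ws ! ((j + k - 1) mod k))" using cyc_prev[OF cyc j(1)] j by (simp add: k_def joined_sym)
  hence p: "ws ! ((j + k - 1) mod k) = u" using leaf_nbr[OF assms(1-3)] by blast
  have "(j + k - 1) mod k = (j + 1) mod k"
    using n p nth_eq_iff_index_eq[OF dist pv_lt[OF j(1)] nx_lt[OF j(1)]] by (simp add: k_def)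
  thus False using pv_ne_nx[OF k3] j(1) by (simp add: k_def)
qed

lemma joined_leaf:
  assumes "e = (v, u) \<or> e = (u, v)" "x \<noteq> v" "y \<noteq> v"
  shows "joined (A - {e}) x y \<longleftrightarrow> joined A x y"
  using assms by (auto simp: joined_def)

lemma cycle_list_leaf:
  assumes "e = (v, u) \<or> e = (u, v)" "u \<noteq> v" "\<forall>a\<in>A. fst a = v \<or> snd a = v \<longrightarrow> a = e"
  shows "cycle_list (A - {e}) ws \<longleftrightarrow> cycle_list A ws"
proof
  assume c: "cycle_list A ws"
  have nv: "v \<notin> set ws" by (rule leaf_off_cycle[OF assms c])
  have "joined (A - {e}) (ws ! j) (ws ! ((j + 1) mod length ws))" if "j < length ws" for j
  proof -
    have "ws ! j \<noteq> v" "ws ! ((j + 1) mod length ws) \<noteq> v"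
      using nv nth_mem[OF that] nx_mem[OF that] by auto
    thus ?thesis using joined_leaf[OF assms(1)] cyc_next[OF c that] by blast
  qed
  thus "cycle_list (A - {e}) ws" using c unfolding cycle_list_def by blast
next
  assume "cycle_list (A - {e}) ws"
  thus "cycle_list A ws" unfolding cycle_list_def joined_def by auto
qed

lemma fwd_count_leaf:
  assumes "e = (v, u) \<or> e = (u, v)" "v \<notin> set ws"
  shows "fwd_count (A - {e}) ws = fwd_count A ws"
proof -
  have "{j. j < length ws \<and> (ws ! j, ws ! ((j + 1) mod length ws)) \<in> A - {e}}
      = {j. j < length ws \<and> (ws ! j, ws ! ((j + 1) mod length ws)) \<in> A}"
  proof -
    have "(ws ! j, ws ! ((j + 1) mod length ws)) \<noteq> e" if "j < length ws" for j
      using assms nth_mem[OF that] nx_mem[OF that] by auto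
    thus ?thesis by blast
  qed
  thus ?thesis by (simp add: fwd_count_def)
qed

lemma cycle_arcs_leaf:
  assumes "e = (v, u) \<or> e = (u, v)" "v \<notin> set ws"
  shows "cycle_arcs (A - {e}) ws = cycle_arcs A ws"
proof -
  have "(ws ! j, ws ! ((j + 1) mod length ws)) \<noteq> e" "(ws ! ((j + 1) mod length ws), ws ! j) \<noteq> e"
    if "j < length ws" for j
    using assms nth_mem[OF that] nx_mem[OF that] by auto
  thus ?thesis unfolding cycle_arcs_def by blast
qed

lemma cyc_val_leaf:
  assumes "e = (v, u) \<or> e = (u, v)" "v \<notin> set ws"
  shows "cyc_val (A - {e}) ws = cyc_val A ws"
  using fwd_count_leaf[OF assms] by (simp add: cyc_val_def)

lemma is_cycle_leaf:
  assumes "e = (v, u) \<or> e = (u, v)" "u \<noteq> v" "\<forall>a\<in>A. fst a = v \<or> snd a = v \<longrightarrow> a = e"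
  shows "is_cycle (A - {e}) Z \<longleftrightarrow> is_cycle A Z"
proof -
  have "cycle_list (A - {e}) vs \<and> Z = cycle_arcs (A - {e}) vs \<longleftrightarrow> cycle_list A vs \<and> Z = cycle_arcs A vs" for vs
    using cycle_list_leaf[OF assms] leaf_off_cycle[OF assms] cycle_arcs_leaf[OF assms(1)] by blast
  thus ?thesis unfolding is_cycle_def by blast
qed

lemma detour:
  assumes "(x, y) \<in> (sub_adj S F)\<^sup>*" "x \<noteq> v"
    and "e = (v, u) \<or> e = (u, v)" "u \<noteq> v" "\<forall>a\<in>F. fst a = v \<or> snd a = v \<longrightarrow> a = e"
  shows "(y \<noteq> v \<longrightarrow> (x, y) \<in> (sub_adj (S - {v}) (F - {e}))\<^sup>*) \<and> (y = v \<longrightarrow> (x, u) \<in> (sub_adj (S - {v}) (F - {e}))\<^sup>*)"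
  using assms(1)
proof (induction rule: rtrancl_induct)
  case base thus ?case using assms(2) by simp
next
  case (step y z)
  show ?case
  proof (cases "y = v")
    case True
    hence "joined F v z" using step(2) by (auto simp: sub_adj_def joined_def)
    hence "z = u" using leaf_nbr[OF assms(3-5)] by blast
    thus ?thesis using step(3) True assms(4) by auto
  next
    case False
    show ?thesis
    proof (cases "z = v")
      case True
      hence "joined F v y" using step(2) by (auto simp: sub_adj_def joined_def)
      hence "y = u" using leaf_nbr[OF assms(3-5)] by blast
      thus ?thesis using step(3) True False by auto
    next
      case False2: False
      have "(y, z) \<in> sub_adj (S - {v}) (F - {e})"
        using step(2) False False2 assms(3) by (auto simp: sub_adj_def)
      thus ?thesis using step(3) False False2 by auto
    qed
  qed
qed

lemma unicyclic_leaf: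
  assumes "e = (v, u) \<or> e = (u, v)" "u \<noteq> v" "\<forall>a\<in>A. fst a = v \<or> snd a = v \<longrightarrow> a = e"
    and eA: "e \<in> A" and vC: "v \<in> C" and uC: "u \<in> C"
  shows "unicyclic (C - {v}) (A - {e}) \<longleftrightarrow> unicyclic C A"
proof -
  have cyc: "is_cycle (A - {e}) = is_cycle A" by (rule ext) (rule is_cycle_leaf[OF assms(1-3)])
  have inside: "(\<forall>a \<in> A - {e}. fst a \<in> C - {v} \<and> snd a \<in> C - {v}) \<longleftrightarrow> (\<forall>a \<in> A. fst a \<in> C \<and> snd a \<in> C)"
  proof
    assume h: "\<forall>a \<in> A - {e}. fst a \<in> C - {v} \<and> snd a \<in> C - {v}"
    show "\<forall>a \<in> A. fst a \<in> C \<and> snd a \<in> C"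
    proof
      fix a assume a: "a \<in> A"
      show "fst a \<in> C \<and> snd a \<in> C"
      proof (cases "a = e")
        case True thus ?thesis using assms(1) vC uC by auto
      next
        case False thus ?thesis using h a by auto
      qed
    qed
  next
    assume h: "\<forall>a \<in> A. fst a \<in> C \<and> snd a \<in> C"
    show "\<forall>a \<in> A - {e}. fst a \<in> C - {v} \<and> snd a \<in> C - {v}"
    proof
      fix a assume a: "a \<in> A - {e}"
      hence "fst a \<noteq> v" "snd a \<noteq> v" using assms(3) by auto
      thus "fst a \<in> C - {v} \<and> snd a \<in> C - {v}" using h a by auto
    qed
  qed
  have conn: "(\<forall>x \<in> C - {v}. \<forall>y \<in> C - {v}. (x, y) \<in> (sub_adj (C - {v}) (A - {e}))\<^sup>*)
      \<longleftrightarrow> (\<forall>x \<in> C. \<forall>y \<in> C. (x, y) \<in> (sub_adj C A)\<^sup>*)"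
  proof
    assume h: "\<forall>x \<in> C - {v}. \<forall>y \<in> C - {v}. (x, y) \<in> (sub_adj (C - {v}) (A - {e}))\<^sup>*"
    have mono: "(sub_adj (C - {v}) (A - {e}))\<^sup>* \<subseteq> (sub_adj C A)\<^sup>*"
      by (rule rtrancl_mono) (auto simp: sub_adj_def)
    have vu: "(v, u) \<in> sub_adj C A" using assms(1) eA vC uC by (auto simp: sub_adj_def)
    have toU: "(x, u) \<in> (sub_adj C A)\<^sup>*" if "x \<in> C" for x
    proof (cases "x = v")
      case True thus ?thesis using vu by auto
    next
      case False
      hence "(x, u) \<in> (sub_adj (C - {v}) (A - {e}))\<^sup>*" using h that uC assms(2) by auto
      thus ?thesis using mono by auto
    qed
    have s: "sym ((sub_adj C A)\<^sup>*)" using sym_sub_adj by (rule sym_rtrancl)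
    show "\<forall>x \<in> C. \<forall>y \<in> C. (x, y) \<in> (sub_adj C A)\<^sup>*"
    proof (intro ballI)
      fix x y assume "x \<in> C" "y \<in> C"
      have "(u, y) \<in> (sub_adj C A)\<^sup>*" using toU[OF \<open>y \<in> C\<close>] s by (auto simp: sym_def)
      thus "(x, y) \<in> (sub_adj C A)\<^sup>*" using toU[OF \<open>x \<in> C\<close>] by (rule rtrancl_trans[rotated])
    qed
  next
    assume h: "\<forall>x \<in> C. \<forall>y \<in> C. (x, y) \<in> (sub_adj C A)\<^sup>*"
    show "\<forall>x \<in> C - {v}. \<forall>y \<in> C - {v}. (x, y) \<in> (sub_adj (C - {v}) (A - {e}))\<^sup>*"
    proof (intro ballI)
      fix x y assume x: "x \<in> C - {v}" and y: "y \<in> C - {v}"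
      have "(x, y) \<in> (sub_adj C A)\<^sup>*" using h x y by auto
      from detour[OF this _ assms(1-3)] x y
      show "(x, y) \<in> (sub_adj (C - {v}) (A - {e}))\<^sup>*" by auto
    qed
  qed
  show ?thesis unfolding unicyclic_def cyc inside conn ..
qed

lemma flags_leaf:
  assumes "e = (v, u) \<or> e = (u, v)" "u \<noteq> v" "\<forall>a\<in>A. fst a = v \<or> snd a = v \<longrightarrow> a = e"
    and eA: "e \<in> A" and vC: "v \<in> C" and uC: "u \<in> C"
  shows "alpha_comp (C - {v}) (A - {e}) \<longleftrightarrow> alpha_comp C A"
    and "beta_comp (C - {v}) (A - {e}) \<longleftrightarrow> beta_comp C A"
    and "vanishing_comp (C - {v}) (A - {e}) \<longleftrightarrow> vanishing_comp C A"
proof -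
  have cv0: "cycle_list (A - {e}) ws \<and> P (cyc_val (A - {e}) ws) \<longleftrightarrow> cycle_list A ws \<and> P (cyc_val A ws)" for P ws
  proof -
    have "cycle_list (A - {e}) ws \<longleftrightarrow> cycle_list A ws" by (rule cycle_list_leaf[OF assms(1-3)])
    moreover have "cycle_list A ws \<Longrightarrow> cyc_val (A - {e}) ws = cyc_val A ws"
      using leaf_off_cycle[OF assms(1-3)] cyc_val_leaf[OF assms(1)] by blast
    ultimately show ?thesis by auto
  qed
  have cv: "(\<exists>ws. cycle_list (A - {e}) ws \<and> P (cyc_val (A - {e}) ws)) \<longleftrightarrow> (\<exists>ws. cycle_list A ws \<and> P (cyc_val A ws))" for P
    using cv0 by blast
  note u = unicyclic_leaf[OF assms]
  show "alpha_comp (C - {v}) (A - {e}) \<longleftrightarrow> alpha_comp C A" unfolding alpha_comp_def u using cv[of "\<lambda>n. n mod 5 \<in> {2, 3}"] by simp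
  show "beta_comp (C - {v}) (A - {e}) \<longleftrightarrow> beta_comp C A" unfolding beta_comp_def u using cv[of "\<lambda>n. n mod 5 \<in> {1, 4}"] by simp
  show "vanishing_comp (C - {v}) (A - {e}) \<longleftrightarrow> vanishing_comp C A" unfolding vanishing_comp_def u using cv[of "\<lambda>n. n mod 5 = 0"] by simp
qed

lemma isolated_comp:
  assumes vS: "v \<in> S" and iso: "\<forall>y. (v, y) \<notin> sub_adj S F"
  shows "{v} \<in> components S F"
proof -
  have "sub_conn S F `` {v} = {v}"
  proof
    show "sub_conn S F `` {v} \<subseteq> {v}"
    proof
      fix y assume "y \<in> sub_conn S F `` {v}"
      hence "(v, y) \<in> (sub_adj S F)\<^sup>*" by (simp add: sub_conn_def)
      thus "y \<in> {v}" using iso by (cases rule: converse_rtranclE) auto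
    qed
    show "{v} \<subseteq> sub_conn S F `` {v}" using vS by (simp add: sub_conn_def)
  qed
  thus ?thesis unfolding components_def using vS by (metis quotientI)
qed

lemma T_noarc:
  assumes fS: "finite S" and vS: "v \<in> S" and na: "\<forall>a\<in>F. fst a \<noteq> v \<and> snd a \<noteq> v"
  shows "T S F = 0"
proof -
  have "\<forall>y. (v, y) \<notin> sub_adj S F" using na by (auto simp: sub_adj_def)
  hence C: "{v} \<in> components S F" using isolated_comp[OF vS] by blast
  have "comp_arcs F {v} = {}" using na by (auto simp: comp_arcs_def)
  hence "tfac {v} (comp_arcs F {v}) = 0" by (simp add: tfac_def)
  thus ?thesis using T_remove[OF fS C] by simp
qed

lemma T_leaf_ext:
  assumes fS: "finite S" and vS: "v \<in> S" and uS: "u \<notin> S" and e1: "e = (v, u) \<or> e = (u, v)" and eF: "e \<in> F"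
    and leaf: "\<forall>a\<in>F. fst a = v \<or> snd a = v \<longrightarrow> a = e"
  shows "T S F = T (S - {v}) (F - {e})"
proof -
  have uv: "u \<noteq> v" using uS vS by auto
  have "\<forall>y. (v, y) \<notin> sub_adj S F"
  proof (intro allI notI)
    fix y assume "(v, y) \<in> sub_adj S F"
    hence "joined F v y" "y \<in> S" by (auto simp: sub_adj_def joined_def)
    thus False using leaf_nbr[OF e1 uv leaf] uS by blast
  qed
  hence C: "{v} \<in> components S F" using isolated_comp[OF vS] by blast
  have ve: "v = fst e \<or> v = snd e" using e1 by auto
  have ca: "comp_arcs F {v} = {e}"
  proof
    show "comp_arcs F {v} \<subseteq> {e}" unfolding comp_arcs_def using leaf by blast
    show "{e} \<subseteq> comp_arcs F {v}" unfolding comp_arcs_def using eF ve by blast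
  qed
  have "\<not> (\<forall>a\<in>{e}. fst a \<in> {v} \<and> snd a \<in> {v})" using e1 uv by (cases e) auto
  hence nu: "\<not> unicyclic {v} {e}" unfolding unicyclic_def by blast
  have "tfac {v} (comp_arcs F {v}) = 1"
    unfolding ca tfac_def using nu by (simp add: alpha_comp_def beta_comp_def vanishing_comp_def)
  thus ?thesis using T_remove[OF fS C] ca by simp
qed

lemma card_filter_image:
  assumes "inj_on f X" "\<forall>D\<in>X. PP (f D) = P D"
  shows "card {D' \<in> f ` X. PP D'} = card {D \<in> X. P D}"
proof -
  have "{D' \<in> f ` X. PP D'} = f ` {D \<in> X. P D}" using assms(2) by auto
  moreover have "inj_on f {D \<in> X. P D}" using assms(1) by (rule inj_on_subset) auto
  ultimately show ?thesis by (simp add: card_image)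
qed

lemma T_leaf_int:
  assumes fS: "finite S" and fF: "finite F" and vS: "v \<in> S" and uS: "u \<in> S" and uv: "u \<noteq> v"
    and e1: "e = (v, u) \<or> e = (u, v)" and eF: "e \<in> F"
    and leaf: "\<forall>a\<in>F. fst a = v \<or> snd a = v \<longrightarrow> a = e"
  shows "T S F = T (S - {v}) (F - {e})"
proof -
  define R where "R = sub_conn S F"
  define S' where "S' = S - {v}"
  define F' where "F' = F - {e}"
  define R' where "R' = sub_conn S' F'"
  define f where "f D = D - {v}" for D :: "'a set"
  have eq: "equiv S R" unfolding R_def by (rule sub_conn_equiv)
  have R'eq: "R' = R \<inter> (S' \<times> S')"
  proof
    have "sub_adj S' F' \<subseteq> sub_adj S F" by (auto simp: sub_adj_def S'_def F'_def)
    hence "(sub_adj S' F')\<^sup>* \<subseteq> (sub_adj S F)\<^sup>*" by (rule rtrancl_mono)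
    thus "R' \<subseteq> R \<inter> (S' \<times> S')" by (auto simp: R'_def R_def sub_conn_def S'_def)
  next
    show "R \<inter> (S' \<times> S') \<subseteq> R'"
    proof
      fix p assume p: "p \<in> R \<inter> (S' \<times> S')"
      then obtain x y where xy: "p = (x, y)" "x \<in> S'" "y \<in> S'" "(x, y) \<in> (sub_adj S F)\<^sup>*"
        by (auto simp: R_def sub_conn_def)
      have "(x, y) \<in> (sub_adj S' F')\<^sup>*"
        using detour[OF xy(4) _ e1 uv leaf] xy(2,3) by (auto simp: S'_def F'_def)
      thus "p \<in> R'" using xy by (auto simp: R'_def sub_conn_def)
    qed
  qed
  have vuR: "(v, u) \<in> R" using e1 eF vS uS by (auto simp: R_def sub_conn_def sub_adj_def)
  have Rsym: "(x, y) \<in> R \<Longrightarrow> (y, x) \<in> R" for x y using eq by (meson equiv_def symD)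
  have Rtr: "(x, y) \<in> R \<Longrightarrow> (y, z) \<in> R \<Longrightarrow> (x, z) \<in> R" for x y z using eq by (meson equiv_def transD)
  have RS: "(x, y) \<in> R \<Longrightarrow> x \<in> S \<and> y \<in> S" for x y by (auto simp: R_def sub_conn_def)
  have img: "R' `` {x} = f (R `` {x})" if "x \<in> S'" for x
    using that R'eq RS by (auto simp: f_def S'_def)
  have comps: "components S' F' = f ` components S F"
  proof
    show "components S' F' \<subseteq> f ` components S F"
    proof
      fix D assume "D \<in> components S' F'"
      then obtain x where x: "x \<in> S'" "D = R' `` {x}" unfolding components_def R'_def by (auto elim: quotientE)
      hence "R `` {x} \<in> components S F" unfolding components_def R_def by (auto simp: S'_def intro: quotientI)
      thus "D \<in> f ` components S F" using img x by auto
    qed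
  next
    show "f ` components S F \<subseteq> components S' F'"
    proof
      fix D assume "D \<in> f ` components S F"
      then obtain x where x: "x \<in> S" "D = f (R `` {x})" unfolding components_def R_def by (auto elim: quotientE)
      obtain y where y: "y \<in> S'" "R `` {x} = R `` {y}"
      proof (cases "x = v")
        case True
        have "R `` {v} = R `` {u}" using vuR eq by (simp add: equiv_class_eq)
        thus ?thesis using that True uS uv by (auto simp: S'_def)
      next
        case False thus ?thesis using that x by (auto simp: S'_def)
      qed
      have "R' `` {y} \<in> components S' F'" unfolding components_def R'_def using y(1) by (rule quotientI)
      thus "D \<in> components S' F'" using img[OF y(1)] x y by simp
    qed
  qed
  have cls: "\<exists>x\<in>S. D = R `` {x}" if "D \<in> components S F" for D
    using that unfolding components_def R_def by (auto elim: quotientE)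
  have inD: "q \<in> D" if "D \<in> components S F" "p \<in> D" "(p, q) \<in> R" for D p q
    using cls[OF that(1)] that(2,3) Rtr by auto
  have inj: "inj_on f (components S F)"
  proof
    fix D1 D2 assume D1: "D1 \<in> components S F" and D2: "D2 \<in> components S F" and feq: "f D1 = f D2"
    obtain w where w: "w \<in> D1" "w \<noteq> v"
    proof -
      obtain x where x: "x \<in> S" "D1 = R `` {x}" using cls[OF D1] by blast
      have xx: "x \<in> D1" using x eq by (auto simp: equiv_def refl_on_def)
      show ?thesis
      proof (cases "x = v")
        case True
        hence "u \<in> D1" using inD[OF D1 xx] vuR by simp
        thus ?thesis using that uv by blast
      next
        case False thus ?thesis using that xx by blast
      qed
    qed
    have "w \<in> D2" using w feq by (auto simp: f_def)
    obtain x1 where x1: "x1 \<in> S" "D1 = R `` {x1}" using cls[OF D1] by blast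
    obtain x2 where x2: "x2 \<in> S" "D2 = R `` {x2}" using cls[OF D2] by blast
    have "(x1, w) \<in> R" "(x2, w) \<in> R" using w \<open>w \<in> D2\<close> x1 x2 by auto
    hence "(x1, x2) \<in> R" using Rsym Rtr by blast
    thus "D1 = D2" using x1 x2 eq by (simp add: equiv_class_eq)
  qed
  define Cv where "Cv = R `` {v}"
  have Cv: "Cv \<in> components S F" unfolding Cv_def components_def R_def using vS by (rule quotientI)
  have vCv: "v \<in> Cv" and uCv: "u \<in> Cv" using vuR eq vS by (auto simp: Cv_def equiv_def refl_on_def)
  have vD: "v \<in> D \<longleftrightarrow> D = Cv" if D: "D \<in> components S F" for D
  proof
    assume "v \<in> D"
    then obtain x where "x \<in> S" "D = R `` {x}" "(x, v) \<in> R" using cls[OF D] by auto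
    thus "D = Cv" unfolding Cv_def using eq by (simp add: equiv_class_eq)
  qed (use vCv in simp)
  have DS: "D \<subseteq> S" if D: "D \<in> components S F" for D
  proof
    fix y assume "y \<in> D"
    then obtain x where "(x, y) \<in> R" using cls[OF D] by auto
    thus "y \<in> S" using RS by blast
  qed
  have nva: "\<forall>a\<in>F - {e}. fst a \<noteq> v \<and> snd a \<noteq> v" using leaf by blast
  have ca_v: "comp_arcs F' (f D) = comp_arcs F D - {e}" if "D \<in> components S F" "v \<in> D" for D
    using that nva by (auto simp: comp_arcs_def F'_def f_def)
  have ca_nv: "comp_arcs F' (f D) = comp_arcs F D" if "D \<in> components S F" "v \<notin> D" for D
  proof -
    have "u \<notin> D"
    proof
      assume "u \<in> D"
      hence "v \<in> D" using inD[OF that(1)] vuR Rsym by blast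
      thus False using that(2) by simp
    qed
    thus ?thesis using that e1 by (auto simp: comp_arcs_def F'_def f_def)
  qed
  have fD: "f D = D" if "v \<notin> D" for D using that by (simp add: f_def)
  have eA: "e \<in> comp_arcs F Cv" using eF e1 vCv by (auto simp: comp_arcs_def)
  have leafA: "\<forall>a\<in>comp_arcs F Cv. fst a = v \<or> snd a = v \<longrightarrow> a = e" using leaf unfolding comp_arcs_def by blast
  note fl = flags_leaf[OF e1 uv leafA eA vCv uCv]
  have finCv: "finite Cv" using DS[OF Cv] fS by (rule finite_subset)
  have finA: "finite (comp_arcs F Cv)" using fF by (auto simp: comp_arcs_def)
  have cardeq: "card (Cv - {v}) = card (comp_arcs F Cv - {e}) \<longleftrightarrow> card Cv = card (comp_arcs F Cv)"
  proof -
    have "card Cv \<ge> 1" "card (comp_arcs F Cv) \<ge> 1" using finCv vCv finA eA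
      by (auto simp: Suc_le_eq card_gt_0_iff)
    thus ?thesis using vCv eA finCv finA by (simp add: card_Diff_singleton, linarith)
  qed
  have tr: "PP (f D) (comp_arcs F' (f D)) = PP D (comp_arcs F D)"
    if "D \<in> components S F" and "PP (Cv - {v}) (comp_arcs F Cv - {e}) = PP Cv (comp_arcs F Cv)" for D PP
  proof (cases "v \<in> D")
    case True
    hence "D = Cv" using vD that(1) by simp
    thus ?thesis using ca_v[OF that(1) True] that(2) by (simp add: f_def)
  next
    case False thus ?thesis using ca_nv[OF that(1) False] fD[OF False] by simp
  qed
  have "all_regular S' F' \<longleftrightarrow> all_regular S F"
    unfolding all_regular_def comps using tr[of _ "\<lambda>C A. card C = card A"] cardeq by auto
  moreover have "n_alpha S' F' = n_alpha S F"
    unfolding n_alpha_def comps using tr[of _ alpha_comp] fl(1) by (intro card_filter_image[OF inj]) auto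
  moreover have "n_beta S' F' = n_beta S F"
    unfolding n_beta_def comps using tr[of _ beta_comp] fl(2) by (intro card_filter_image[OF inj]) auto
  moreover have "n_van S' F' = n_van S F"
    unfolding n_van_def comps using tr[of _ vanishing_comp] fl(3) by (intro card_filter_image[OF inj]) auto
  ultimately show ?thesis by (simp add: T_def S'_def F'_def)
qed

lemma Q_leaf:
  assumes fS: "finite S" and fF: "finite F" and vS: "v \<in> S" and eF: "e \<in> F"
    and ve: "v = fst e \<or> v = snd e" and ne: "fst e \<noteq> snd e"
    and leaf: "\<forall>a\<in>F. fst a = v \<or> snd a = v \<longrightarrow> a = e"
  shows "Q S F = Q (S - {v}) (F - {e})"
proof -
  have S: "S = {v} \<union> (S - {v})" and F: "F = {e} \<union> (F - {e})" using vS eF by auto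
  have hyp: "\<forall>g\<in>VB ({v} \<union> (S - {v})) ({e} \<union> (F - {e})). g ` {v} \<subseteq> {e}"
  proof
    fix g assume "g \<in> VB ({v} \<union> (S - {v})) ({e} \<union> (F - {e}))"
    hence "g v \<in> F" "fst (g v) = v \<or> snd (g v) = v" using vS eF by (auto simp: VB_def bij_betw_def)
    thus "g ` {v} \<subseteq> {e}" using leaf by auto
  qed
  have "Q ({v} \<union> (S - {v})) ({e} \<union> (F - {e})) = Q {v} {e} * Q (S - {v}) (F - {e})"
    by (rule Q_split) (use fS fF hyp in auto)
  thus ?thesis using Q_single[OF ne ve] S F by simp
qed

definition inc :: "('a \<times> 'a) set \<Rightarrow> 'a \<Rightarrow> ('a \<times> 'a) set" where
  "inc F x = {a \<in> F. fst a = x \<or> snd a = x}"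

definition arcb :: "('a \<times> 'a) set \<Rightarrow> 'a \<Rightarrow> 'a \<Rightarrow> 'a \<times> 'a" where
  "arcb F x y = (if (x, y) \<in> F then (x, y) else (y, x))"

definition orient :: "('a \<times> 'a) set \<Rightarrow> bool" where
  "orient F \<longleftrightarrow> (\<forall>a\<in>F. fst a \<noteq> snd a) \<and> (\<forall>x y. (x, y) \<in> F \<longrightarrow> (y, x) \<notin> F)"

lemma arcb_in: "joined F x y \<Longrightarrow> arcb F x y \<in> F"
  by (auto simp: arcb_def joined_def)

lemma arcb_inc: "joined F x y \<Longrightarrow> arcb F x y \<in> inc F x \<and> arcb F x y \<in> inc F y"
  by (auto simp: arcb_def joined_def inc_def)

lemma arcb_ends: "arcb F x y = (x, y) \<or> arcb F x y = (y, x)"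
  by (auto simp: arcb_def)

lemma joined_ne: "orient F \<Longrightarrow> joined F x y \<Longrightarrow> x \<noteq> y"
  by (auto simp: orient_def joined_def)

lemma cyc_distinct3:
  assumes c: "cycle_list F ws" and j: "j < length ws"
  shows "ws ! j \<noteq> ws ! ((j + 1) mod length ws)" "ws ! j \<noteq> ws ! ((j + length ws - 1) mod length ws)"
    "ws ! ((j + 1) mod length ws) \<noteq> ws ! ((j + length ws - 1) mod length ws)"
proof -
  have d: "distinct ws" and k3: "3 \<le> length ws" using c by (auto simp: cycle_list_def)
  note ne = nth_eq_iff_index_eq[OF d]
  show "ws ! j \<noteq> ws ! ((j + 1) mod length ws)" using ne[OF j nx_lt[OF j]] nx_ne[OF k3 j] by simp
  show "ws ! j \<noteq> ws ! ((j + length ws - 1) mod length ws)" using ne[OF j pv_lt[OF j]] pv_ne[OF k3 j] by simp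
  show "ws ! ((j + 1) mod length ws) \<noteq> ws ! ((j + length ws - 1) mod length ws)"
    using ne[OF nx_lt[OF j] pv_lt[OF j]] pv_ne_nx[OF k3 j] by simp
qed

lemma cyc_inc:
  assumes fF: "finite F" and c: "cycle_list F ws" and deg: "\<forall>x\<in>set ws. card (inc F x) = 2"
    and j: "j < length ws"
  shows "inc F (ws ! j) = {arcb F (ws ! j) (ws ! ((j + 1) mod length ws)),
                           arcb F (ws ! ((j + length ws - 1) mod length ws)) (ws ! j)}"
proof -
  define k where "k = length ws"
  define a1 where "a1 = arcb F (ws ! j) (ws ! ((j + 1) mod k))"
  define a2 where "a2 = arcb F (ws ! ((j + k - 1) mod k)) (ws ! j)"
  have j1: "joined F (ws ! j) (ws ! ((j + 1) mod k))" using cyc_next[OF c j] by (simp add: k_def)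
  have j2: "joined F (ws ! ((j + k - 1) mod k)) (ws ! j)" using cyc_prev[OF c j] by (simp add: k_def)
  have i1: "a1 \<in> inc F (ws ! j)" using arcb_inc[OF j1] by (simp add: a1_def)
  have i2: "a2 \<in> inc F (ws ! j)" using arcb_inc[OF j2] by (simp add: a2_def)
  note d3 = cyc_distinct3[OF c j, folded k_def]
  have ne: "a1 \<noteq> a2"
    using arcb_ends[of F "ws ! j" "ws ! ((j + 1) mod k)"] arcb_ends[of F "ws ! ((j + k - 1) mod k)" "ws ! j"] d3
    unfolding a1_def a2_def by auto
  have fi: "finite (inc F (ws ! j))" using fF by (simp add: inc_def)
  have "card (inc F (ws ! j)) = 2" using deg j by simp
  moreover have "card {a1, a2} = 2" using ne by simp
  moreover have "{a1, a2} \<subseteq> inc F (ws ! j)" using i1 i2 by simp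
  ultimately have "{a1, a2} = inc F (ws ! j)" using fi by (metis card_subset_eq)
  thus ?thesis by (simp add: a1_def a2_def k_def)
qed

lemma cyc_nbr:
  assumes fF: "finite F" and c: "cycle_list F ws" and deg: "\<forall>x\<in>set ws. card (inc F x) = 2"
    and j: "j < length ws" and jy: "joined F (ws ! j) y"
  shows "y = ws ! ((j + 1) mod length ws) \<or> y = ws ! ((j + length ws - 1) mod length ws)"
proof -
  define k where "k = length ws"
  have "arcb F (ws ! j) y \<in> inc F (ws ! j)" using arcb_inc[OF jy] by simp
  hence "arcb F (ws ! j) y = arcb F (ws ! j) (ws ! ((j + 1) mod k)) \<or>
         arcb F (ws ! j) y = arcb F (ws ! ((j + k - 1) mod k)) (ws ! j)"
    using cyc_inc[OF fF c deg j] by (simp add: k_def)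
  moreover note d3 = cyc_distinct3[OF c j, folded k_def]
  ultimately show ?thesis
    using arcb_ends[of F "ws ! j" y] arcb_ends[of F "ws ! j" "ws ! ((j + 1) mod k)"]
      arcb_ends[of F "ws ! ((j + k - 1) mod k)" "ws ! j"]
    unfolding k_def by auto
qed

lemma cyc_closed:
  assumes fF: "finite F" and c: "cycle_list F ws" and deg: "\<forall>x\<in>set ws. card (inc F x) = 2"
    and x: "x \<in> set ws" and jy: "joined F x y"
  shows "y \<in> set ws"
proof -
  obtain j where j: "j < length ws" "x = ws ! j" using x by (auto simp: in_set_conv_nth)
  show ?thesis using cyc_nbr[OF fF c deg j(1)] jy j nth_mem[OF nx_lt[OF j(1)]] nth_mem[OF pv_lt[OF j(1)]] by auto
qed

lemma card_filter_sum: "finite A \<Longrightarrow> card {a \<in> A. P a} = (\<Sum>a\<in>A. if P a then 1 else 0)"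
  by (simp add: sum.inter_filter[symmetric])

lemma dcount:
  assumes "finite X" "finite A"
  shows "(\<Sum>x\<in>X. card {a \<in> A. P x a}) = (\<Sum>a\<in>A. card {x \<in> X. P x a})"
  using assms by (simp add: card_filter_sum sum.swap[of _ X])

lemma deg2:
  assumes fS: "finite S" and fF: "finite F" and ori: "orient F" and cS: "card F = card S"
    and dg: "\<forall>v\<in>S. card (inc F v) \<ge> 2"
  shows "\<forall>v\<in>S. card (inc F v) = 2" and "\<forall>a\<in>F. fst a \<in> S \<and> snd a \<in> S"
proof -
  define e where "e a = card {v \<in> S. fst a = v \<or> snd a = v}" for a
  have dc: "(\<Sum>v\<in>S. card (inc F v)) = (\<Sum>a\<in>F. e a)"
    unfolding inc_def e_def using dcount[OF fS fF, of "\<lambda>v a. fst a = v \<or> snd a = v"] by simp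
  have ele: "e a \<le> 2" for a
  proof -
    have "{v \<in> S. fst a = v \<or> snd a = v} \<subseteq> {fst a, snd a}" by auto
    hence "e a \<le> card {fst a, snd a}" unfolding e_def by (rule card_mono[rotated]) simp
    also have "\<dots> \<le> 2" by (simp add: card_insert_le_m1)
    finally show ?thesis .
  qed
  have s1: "(\<Sum>v\<in>S. 2) \<le> (\<Sum>v\<in>S. card (inc F v))" using dg by (intro sum_mono) auto
  have s2: "(\<Sum>a\<in>F. e a) \<le> (\<Sum>a\<in>F. 2)" using ele by (intro sum_mono) auto
  have s3: "(\<Sum>a\<in>F. (2::nat)) = (\<Sum>v\<in>S. 2)" using cS by simp
  have eq1: "(\<Sum>v\<in>S. (2::nat)) = (\<Sum>v\<in>S. card (inc F v))" using s1 s2 s3 dc by linarith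
  have eq2: "(\<Sum>a\<in>F. e a) = (\<Sum>a\<in>F. 2)" using s1 s2 s3 dc by linarith
  show "\<forall>v\<in>S. card (inc F v) = 2"
  proof
    fix v assume v: "v \<in> S"
    show "card (inc F v) = 2" using sum_mono_inv[OF eq1 _ v fS] dg by auto
  qed
  show "\<forall>a\<in>F. fst a \<in> S \<and> snd a \<in> S"
  proof
    fix a assume a: "a \<in> F"
    have e2: "e a = 2" using sum_mono_inv[OF eq2 _ a fF] ele by auto
    have ne: "fst a \<noteq> snd a" using ori a by (auto simp: orient_def)
    have sub: "{v \<in> S. fst a = v \<or> snd a = v} \<subseteq> {fst a, snd a}" by auto
    have "card {fst a, snd a} = 2" using ne by simp
    hence "{v \<in> S. fst a = v \<or> snd a = v} = {fst a, snd a}"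
      using e2 sub by (metis card_subset_eq finite.emptyI finite.insertI e_def)
    thus "fst a \<in> S \<and> snd a \<in> S" by blast
  qed
qed

definition nxt :: "('a \<times> 'a) set \<Rightarrow> 'a set \<Rightarrow> 'a \<Rightarrow> 'a \<Rightarrow> 'a" where
  "nxt F S p c = (SOME y. joined F c y \<and> y \<noteq> p \<and> y \<in> S)"

primrec wk :: "('a \<times> 'a) set \<Rightarrow> 'a set \<Rightarrow> 'a \<Rightarrow> 'a \<Rightarrow> nat \<Rightarrow> 'a \<times> 'a" where
  "wk F S x0 y0 0 = (x0, y0)"
| "wk F S x0 y0 (Suc n) = (snd (wk F S x0 y0 n), nxt F S (fst (wk F S x0 y0 n)) (snd (wk F S x0 y0 n)))"

lemma exists_cycle:
  assumes fS: "finite S" and ori: "orient F" and x0: "x0 \<in> S" and y0: "y0 \<in> S" and j0: "joined F x0 y0"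
    and H: "\<forall>c\<in>S. \<forall>p. \<exists>y. joined F c y \<and> y \<noteq> p \<and> y \<in> S"
  shows "\<exists>ws. cycle_list F ws \<and> set ws \<subseteq> S"
proof -
  define W where "W = wk F S x0 y0"
  define x where "x n = fst (W n)" for n
  have nx: "joined F c (nxt F S p c) \<and> nxt F S p c \<noteq> p \<and> nxt F S p c \<in> S" if "c \<in> S" for c p
    unfolding nxt_def using H that by (metis (mono_tags, lifting) someI_ex)
  have inv: "fst (W n) \<in> S \<and> snd (W n) \<in> S \<and> joined F (fst (W n)) (snd (W n))" for n
  proof (induction n)
    case 0 thus ?case using x0 y0 j0 by (simp add: W_def)
  next
    case (Suc n) thus ?case using nx[of "snd (W n)" "fst (W n)"] by (simp add: W_def)
  qed
  have xs: "x (Suc n) = snd (W n)" for n by (simp add: x_def W_def)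
  have xS: "x n \<in> S" for n using inv by (simp add: x_def)
  have xj: "joined F (x n) (x (Suc n))" for n using inv xs by (simp add: x_def)
  have x2: "x (Suc (Suc n)) \<noteq> x n" for n
    using nx[of "snd (W n)" "fst (W n)"] inv[of n] by (simp add: x_def W_def)
  have "\<not> inj_on x {..card S}"
  proof
    assume "inj_on x {..card S}"
    hence "card {..card S} \<le> card S" using xS fS by (intro card_inj_on_le) auto
    thus False by simp
  qed
  then obtain a b where ab: "a \<noteq> b" "x a = x b" unfolding inj_on_def by blast
  have ex: "\<exists>j. \<exists>i<j. x i = x j"
  proof (cases "a < b")
    case True thus ?thesis using ab by blast
  next
    case False hence "b < a" using ab(1) by simp
    thus ?thesis using ab(2) by metis
  qed
  define J where "J = (LEAST j. \<exists>i<j. x i = x j)"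
  have "\<exists>i<J. x i = x J" unfolding J_def by (rule LeastI_ex[OF ex])
  then obtain i where i: "i < J" "x i = x J" by blast
  have minJ: "x i' \<noteq> x j" if "j < J" "i' < j" for i' j
  proof
    assume "x i' = x j"
    hence "J \<le> j" unfolding J_def using that(2) by (intro Least_le) blast
    thus False using that(1) by simp
  qed
  define ws where "ws = map x [i..<J]"
  have len: "length ws = J - i" by (simp add: ws_def)
  have nth: "t < J - i \<Longrightarrow> ws ! t = x (i + t)" for t by (simp add: ws_def)
  have dist: "distinct ws"
  proof -
    have "inj_on x {i..<J}"
    proof
      fix p q assume p: "p \<in> {i..<J}" and q: "q \<in> {i..<J}" and e: "x p = x q"
      show "p = q"
      proof (rule ccontr)
        assume "p \<noteq> q"
        hence "p < q \<or> q < p" by auto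
        thus False using minJ e p q by (metis atLeastLessThan_iff)
      qed
    qed
    thus ?thesis by (simp add: ws_def distinct_map)
  qed
  have l3: "3 \<le> length ws"
  proof -
    have "J \<noteq> Suc i" using i(2) joined_ne[OF ori xj[of i]] by auto
    moreover have "J \<noteq> Suc (Suc i)" using i(2) x2[of i] by auto
    ultimately show ?thesis using i(1) len by linarith
  qed
  have cons: "joined F (ws ! t) (ws ! ((t + 1) mod length ws))" if t: "t < length ws" for t
  proof (cases "t + 1 < length ws")
    case True
    thus ?thesis using t nth len xj[of "i + t"] by simp
  next
    case False
    hence "t + 1 = length ws" using t by simp
    hence "(t + 1) mod length ws = 0" by simp
    moreover have "i + t + 1 = J" using len i \<open>t + 1 = length ws\<close> by simp
    moreover have "ws ! 0 = x (i + t + 1)"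
      using nth[of 0] len i \<open>i + t + 1 = J\<close> by simp
    ultimately show ?thesis using t nth len xj[of "i + t"] by simp
  qed
  have "cycle_list F ws" unfolding cycle_list_def using dist l3 cons by blast
  moreover have "set ws \<subseteq> S" using xS by (auto simp: ws_def)
  ultimately show ?thesis by blast
qed

definition qval :: "nat \<Rightarrow> real" where
  "qval r = (if r = 0 then 0 else if r = 1 \<or> r = 4 then sqrt 5 / phi else sqrt 5 * phi)"

lemma omega5_cis: "omega5 = cis (2 * pi / 5)"
  unfolding omega5_def cis_conv_exp by (simp add: mult.commute mult.left_commute)

lemma cos_nat_period: "cos (x + 2 * pi * real q) = cos x"
proof (induction q)
  case (Suc q)
  have "x + 2 * pi * real (Suc q) = (x + 2 * pi * real q) + 2 * pi" by (simp add: algebra_simps)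
  hence "cos (x + 2 * pi * real (Suc q)) = cos ((x + 2 * pi * real q) + 2 * pi)" by (simp only:)
  also have "\<dots> = cos x" using Suc by (simp only: cos_periodic)
  finally show ?case .
qed simp

lemma cos_2pi5: "cos (2 * pi / 5) = (sqrt 5 - 1) / 4"
proof -
  define w where "w = 2 * pi / 5"
  define c where "c = cos w"
  have w0: "0 < w" and w1: "w < pi / 2" using pi_gt_zero unfolding w_def by linarith+
  have cpos: "0 < c" unfolding c_def using cos_gt_zero[OF w0 w1] .
  have spos: "0 < sin w" using sin_gt_zero[OF w0] w1 pi_gt_zero by linarith
  have c1: "c < 1"
  proof -
    have "sin w ^ 2 > 0" using spos by simp
    hence c2: "c ^ 2 < 1" using sin_cos_squared_add[of w] unfolding c_def by linarith
    show ?thesis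
    proof (rule ccontr)
      assume "\<not> c < 1"
      hence "1 \<le> c" by simp
      hence "1 \<le> c ^ 2" by (rule one_le_power)
      thus False using c2 by simp
    qed
  qed
  have "cos (3 * w) = cos (2 * pi - 2 * w)" unfolding w_def by (simp add: algebra_simps)
  hence "4 * c ^ 3 - 3 * c = 2 * c ^ 2 - 1" unfolding c_def by (simp add: cos_treble_cos cos_double_cos)
  hence "(c - 1) * (4 * c ^ 2 + 2 * c - 1) = 0" by (simp add: algebra_simps power3_eq_cube power2_eq_square)
  hence q: "4 * c ^ 2 + 2 * c - 1 = 0" using c1 by simp
  have "(4 * c + 1) ^ 2 = 5" using q by (simp add: algebra_simps power2_eq_square)
  hence "sqrt 5 = 4 * c + 1" using cpos by (intro real_sqrt_unique) auto
  thus ?thesis unfolding c_def w_def by simp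
qed

lemma cos_4pi5: "cos (4 * pi / 5) = - (sqrt 5 + 1) / 4"
proof -
  have "cos (4 * pi / 5) = cos (2 * (2 * pi / 5))" by (simp add: algebra_simps)
  also have "\<dots> = 2 * cos (2 * pi / 5) ^ 2 - 1" by (rule cos_double_cos)
  also have "\<dots> = 2 * ((sqrt 5 - 1) / 4) ^ 2 - 1" by (simp add: cos_2pi5)
  also have "\<dots> = - (sqrt 5 + 1) / 4"
  proof -
    have s5: "sqrt 5 * sqrt 5 = (5::real)" by simp
    have "((sqrt 5 - 1) / 4) ^ 2 = (sqrt 5 * sqrt 5 - 2 * sqrt 5 + 1) / (16::real)"
      by (simp add: power2_eq_square algebra_simps)
    also have "\<dots> = (6 - 2 * sqrt 5) / 16" unfolding s5 by simp
    finally show ?thesis by simp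
  qed
  finally show ?thesis .
qed

lemma qval_cos: "2 - 2 * cos (2 * pi * real m / 5) = qval (m mod 5)"
proof -
  define r where "r = m mod 5"
  have m: "real m = real r + 5 * real (m div 5)" unfolding r_def
    by (metis of_nat_add of_nat_mult mod_div_mult_eq of_nat_numeral add.commute mult.commute)
  have e: "2 * pi * real m / 5 = 2 * pi * real r / 5 + 2 * pi * real (m div 5)"
    unfolding m by (simp add: algebra_simps)
  have "cos (2 * pi * real m / 5) = cos (2 * pi * real r / 5 + 2 * pi * real (m div 5))"
    unfolding e ..
  also have "\<dots> = cos (2 * pi * real r / 5)" by (rule cos_nat_period)
  finally have cm: "cos (2 * pi * real m / 5) = cos (2 * pi * real r / 5)" .
  have r5: "r < 5" unfolding r_def by simp
  have s5: "sqrt 5 * sqrt 5 = (5::real)" by simp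
  have phi_ne: "1 + sqrt 5 \<noteq> 0" by (metis add_pos_nonneg real_sqrt_ge_zero zero_less_one less_numeral_extra(3) zero_le_numeral)
  have v1: "sqrt 5 / phi = (5 - sqrt 5) / 2"
    unfolding phi_def using phi_ne by (simp add: field_simps algebra_simps s5)
  have v2: "sqrt 5 * phi = (5 + sqrt 5) / 2" unfolding phi_def by (simp add: field_simps algebra_simps s5)
  have "r = 0 \<or> r = 1 \<or> r = 2 \<or> r = 3 \<or> r = 4" using r5 by linarith
  moreover {
    assume "r = 0" hence ?thesis using cm by (simp add: r_def[symmetric] qval_def) }
  moreover {
    assume "r = 1" hence ?thesis using cm cos_2pi5 v1 by (simp add: r_def[symmetric] qval_def field_simps) }
  moreover {
    assume "r = 4"
    have "2 * pi * 4 / 5 = 2 * pi - 2 * pi / 5" by simp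
    hence "cos (2 * pi * 4 / 5) = cos (2 * pi - 2 * pi / 5)" by (simp only:)
    hence "cos (2 * pi * 4 / 5) = (sqrt 5 - 1) / 4" using cos_2pi5 by (simp only: cos_2pi_minus)
    hence ?thesis using cm v1 \<open>r = 4\<close> by (simp add: r_def[symmetric] qval_def field_simps) }
  moreover {
    assume "r = 2"
    have "cos (2 * pi * 2 / 5) = - (sqrt 5 + 1) / 4" using cos_4pi5 by (simp add: algebra_simps)
    hence ?thesis using cm v2 \<open>r = 2\<close> by (simp add: r_def[symmetric] qval_def field_simps) }
  moreover {
    assume "r = 3"
    have "2 * pi * 3 / 5 = 2 * pi - 4 * pi / 5" by simp
    hence "cos (2 * pi * 3 / 5) = cos (2 * pi - 4 * pi / 5)" by (simp only:)
    hence "cos (2 * pi * 3 / 5) = - (sqrt 5 + 1) / 4" using cos_4pi5 by (simp only: cos_2pi_minus)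
    hence ?thesis using cm v2 \<open>r = 3\<close> by (simp add: r_def[symmetric] qval_def field_simps) }
  ultimately show ?thesis by blast
qed

lemma z_re:
  fixes f k :: nat assumes "f \<le> k"
  shows "omega5 ^ f * cnj omega5 ^ (k - f) + cnj (omega5 ^ f * cnj omega5 ^ (k - f))
         = complex_of_real (2 * cos (2 * pi * real (k - 2 * min (k - f) f) / 5))"
proof -
  define t where "t = 2 * pi * (real f - real (k - f)) / 5"
  have z: "omega5 ^ f * cnj omega5 ^ (k - f) = cis t"
    unfolding omega5_cis t_def by (simp add: cis_cnj DeMoivre cis_mult algebra_simps diff_divide_distrib)
  have "cis t + cnj (cis t) = complex_of_real (2 * cos t)"
    by (simp add: cis_cnj complex_eq_iff)
  moreover have "cos t = cos (2 * pi * real (k - 2 * min (k - f) f) / 5)"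
  proof (cases "f \<le> k - f")
    case True
    hence "k - 2 * min (k - f) f = k - 2 * f" by simp
    moreover have "real (k - 2 * f) = real k - 2 * real f" using True assms by (simp add: of_nat_diff)
    moreover have "real (k - f) = real k - real f" using assms by (simp add: of_nat_diff)
    ultimately have eq1: "real (k - 2 * min (k - f) f) = - (real f - real (k - f))" by simp
    have "2 * pi * real (k - 2 * min (k - f) f) / 5 = - t" unfolding t_def eq1 by (simp add: field_simps)
    thus ?thesis by simp
  next
    case False
    hence "k - 2 * min (k - f) f = k - 2 * (k - f)" by simp
    moreover have "real (k - 2 * (k - f)) = 2 * real f - real k" using False assms by (simp add: of_nat_diff)
    moreover have "real (k - f) = real k - real f" using assms by (simp add: of_nat_diff)
    ultimately have eq1: "real (k - 2 * min (k - f) f) = real f - real (k - f)" by simp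
    have "2 * pi * real (k - 2 * min (k - f) f) / 5 = t" unfolding t_def eq1 by (simp add: field_simps)
    thus ?thesis by simp
  qed
  ultimately show ?thesis using z by simp
qed

lemma sign_cycle: "distinct ws \<Longrightarrow> sign (cycle_of_list ws) = (-1) ^ (length ws - 1)"
proof (induction ws rule: cycle_of_list.induct)
  case (1 i j cs)
  have pc: "permutation (cycle_of_list (j # cs))" by (rule permutation_of_cycle)
  have e: "cycle_of_list (i # j # cs) = Transposition.transpose i j \<circ> cycle_of_list (j # cs)" by simp
  have "sign (cycle_of_list (i # j # cs)) = sign (Transposition.transpose i j) * sign (cycle_of_list (j # cs))"
    unfolding e by (rule sign_compose[OF permutation_swap_id pc])
  also have "\<dots> = - ((-1) ^ length cs)" using 1 by (simp add: sign_swap_id)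
  finally show ?case by (simp del: cycle_of_list.simps)
qed auto

lemma qterm_self:
  assumes g: "g \<in> VB S F" and nl: "\<forall>a\<in>F. fst a \<noteq> snd a"
  shows "qterm S g g = 1"
proof -
  have ig: "inj_on g S" and gF: "\<forall>i\<in>S. g i \<in> F" and v: "\<forall>i\<in>S. fst (g i) = i \<or> snd (g i) = i"
    using g by (auto simp: VB_def bij_betw_def)
  have "(\<Prod>i\<in>S. Mi (g i) i * cnj (Mi (g i) i)) = (\<Prod>i\<in>S. 1)"
  proof (rule prod.cong[OF refl])
    fix i assume i: "i \<in> S"
    have "fst (g i) \<noteq> snd (g i)" using gF nl i by auto
    from Mi_norm[OF this, of i] show "Mi (g i) i * cnj (Mi (g i) i) = 1" using v i by auto
  qed
  thus ?thesis unfolding qterm_def relp_self[OF ig] by simp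
qed

lemma qterm_swap:
  assumes fS: "finite S" and g: "g \<in> VB S F" and h: "h \<in> VB S F"
  shows "qterm S h g = cnj (qterm S g h)"
proof -
  have bg: "bij_betw g S F" and bh: "bij_betw h S F" using g h by (auto simp: VB_def)
  have comp: "relp S h g \<circ> relp S g h = id"
  proof
    fix x show "(relp S h g \<circ> relp S g h) x = id x"
    proof (cases "x \<in> S")
      case True
      define y where "y = inv_into S h (g x)"
      have gx: "g x \<in> h ` S" using bg bh True by (auto simp: bij_betw_def)
      have yS: "y \<in> S" unfolding y_def using gx by (rule inv_into_into)
      have hy: "h y = g x" unfolding y_def using gx by (rule f_inv_into_f)
      have "inv_into S g (h y) = x" using hy True bg by (simp add: bij_betw_def)
      thus ?thesis using True yS by (simp add: relp_def y_def)
    qed (simp add: relp_def)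
  qed
  have p1: "permutation (relp S h g)" using relp_permutes[OF bh bg] fS by (rule permutes_imp_permutation[rotated])
  have p2: "permutation (relp S g h)" using relp_permutes[OF bg bh] fS by (rule permutes_imp_permutation[rotated])
  have "sign (relp S h g) * sign (relp S g h) = 1" using sign_compose[OF p1 p2] comp by simp
  hence "sign (relp S h g) = sign (relp S g h)"
    by (metis mult.assoc mult.right_neutral sign_idempotent)
  thus ?thesis unfolding qterm_def by (simp add: mult.commute)
qed

lemma VB_intro:
  assumes fC: "finite C" and cCA: "card C = card A" and e: "g \<in> extensional C"
    and i: "\<forall>c\<in>C. g c \<in> inc A c" and s: "A \<subseteq> g ` C"
  shows "g \<in> VB C A"
proof -
  have im: "g ` C = A" using i s by (auto simp: inc_def)
  have "inj_on g C" using fC im cCA by (intro eq_card_imp_inj_on) auto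
  thus ?thesis using e i im by (auto simp: VB_def bij_betw_def inc_def)
qed

lemma cyc_Q:
  assumes fA: "finite A" and ori: "orient A" and c: "cycle_list A ws" and C: "C = set ws"
    and deg: "\<forall>x\<in>C. card (inc A x) = 2" and inside: "\<forall>a\<in>A. fst a \<in> C \<and> snd a \<in> C"
    and cCA: "card C = card A"
  shows "Q C A = complex_of_real (qval (cyc_val A ws mod 5))"
proof -
  define k where "k = length ws"
  define nx where "nx j = (j + 1) mod k" for j
  define pv where "pv j = (j + k - 1) mod k" for j
  define a where "a j = arcb A (ws ! j) (ws ! nx j)" for j
  have k3: "3 \<le> k" and dist: "distinct ws" using c by (auto simp: cycle_list_def k_def)
  have kpos: "0 < k" using k3 by simp
  have nxlt: "j < k \<Longrightarrow> nx j < k" for j using kpos by (simp add: nx_def)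
  have pvlt: "j < k \<Longrightarrow> pv j < k" for j using kpos by (simp add: pv_def)
  have nxpv: "j < k \<Longrightarrow> nx (pv j) = j" for j using mod_prev[OF kpos] by (simp add: nx_def pv_def)
  have pvnx: "j < k \<Longrightarrow> pv (nx j) = j" for j using mod_next_prev[OF kpos] by (simp add: nx_def pv_def)
  have apv: "j < k \<Longrightarrow> a (pv j) = arcb A (ws ! pv j) (ws ! j)" for j by (simp add: a_def nxpv)
  have degws: "\<forall>x\<in>set ws. card (inc A x) = 2" using deg C by simp
  have incj: "inc A (ws ! j) = {a j, a (pv j)}" if j: "j < k" for j
  proof -
    have h: "inc A (ws ! j) = {arcb A (ws ! j) (ws ! nx j), arcb A (ws ! pv j) (ws ! j)}"
      unfolding nx_def pv_def k_def by (rule cyc_inc[OF fA c degws]) (use j in \<open>simp add: k_def\<close>)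
    show ?thesis unfolding apv[OF j] a_def[of j] by (rule h)
  qed
  have jn: "j < k \<Longrightarrow> joined A (ws ! j) (ws ! nx j)" for j using cyc_next[OF c] by (simp add: nx_def k_def)
  have aA: "j < k \<Longrightarrow> a j \<in> A" for j using arcb_in[OF jn] by (simp add: a_def)
  have ane: "j < k \<Longrightarrow> a j \<noteq> a (pv j)" for j
  proof
    assume j: "j < k" and eq: "a j = a (pv j)"
    have "card (inc A (ws ! j)) = 2" using degws j by (simp add: k_def)
    thus False using incj[OF j] eq by simp
  qed
  have wsne: "j < k \<Longrightarrow> ws ! j \<noteq> ws ! nx j" for j using cyc_distinct3[OF c] by (simp add: nx_def k_def)
  have nxne: "j < k \<Longrightarrow> nx j \<noteq> j" for j using nx_ne[OF k3] by (simp add: nx_def)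
  define idx where "idx x = inv_into {..<k} ((!) ws) x" for x
  have injn: "inj_on ((!) ws) {..<k}" using dist by (simp add: inj_on_nth k_def)
  have idxj: "j < k \<Longrightarrow> idx (ws ! j) = j" for j unfolding idx_def using injn by (simp add: inv_into_f_eq)
  have imgC: "(!) ws ` {..<k} = C" using C by (auto simp: k_def in_set_conv_nth)
  have idxC: "x \<in> C \<Longrightarrow> idx x < k \<and> ws ! idx x = x" for x
    using imgC idxj by (auto simp: idx_def)
  define g1 where "g1 x = (if x \<in> C then a (idx x) else undefined)" for x
  define g2 where "g2 x = (if x \<in> C then a (pv (idx x)) else undefined)" for x
  have wsC: "j < k \<Longrightarrow> ws ! j \<in> C" for j using C by (simp add: k_def)
  have g1j: "j < k \<Longrightarrow> g1 (ws ! j) = a j" for j using wsC idxj by (simp add: g1_def)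
  have g2j: "j < k \<Longrightarrow> g2 (ws ! j) = a (pv j)" for j using wsC idxj by (simp add: g2_def)
  have fC: "finite C" using C by simp
  have g1V: "g1 \<in> VB C A"
  proof (rule VB_intro[OF fC cCA])
    show "g1 \<in> extensional C" by (simp add: g1_def extensional_def)
    show "\<forall>c\<in>C. g1 c \<in> inc A c" using idxC incj g1j by (metis insertI1)
    show "A \<subseteq> g1 ` C"
    proof
      fix b assume b: "b \<in> A"
      define j where "j = idx (fst b)"
      have j: "j < k" "ws ! j = fst b" using idxC inside b by (auto simp: j_def)
      have "b \<in> inc A (ws ! j)" using b j by (simp add: inc_def)
      hence "b = g1 (ws ! j) \<or> b = g1 (ws ! pv j)" using incj[OF j(1)] g1j[OF j(1)] g1j[OF pvlt[OF j(1)]] by auto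
      thus "b \<in> g1 ` C" using wsC j pvlt by blast
    qed
  qed
  have g2V: "g2 \<in> VB C A"
  proof (rule VB_intro[OF fC cCA])
    show "g2 \<in> extensional C" by (simp add: g2_def extensional_def)
    show "\<forall>c\<in>C. g2 c \<in> inc A c" using idxC incj g2j by (metis insertI2 singletonI)
    show "A \<subseteq> g2 ` C"
    proof
      fix b assume b: "b \<in> A"
      define j where "j = idx (fst b)"
      have j: "j < k" "ws ! j = fst b" using idxC inside b by (auto simp: j_def)
      have "b \<in> inc A (ws ! j)" using b j by (simp add: inc_def)
      hence "b = g2 (ws ! nx j) \<or> b = g2 (ws ! j)"
        using incj[OF j(1)] g2j[OF j(1)] g2j[OF nxlt[OF j(1)]] pvnx[OF j(1)] by auto
      thus "b \<in> g2 ` C" using wsC j nxlt by blast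
    qed
  qed
  have VBsub: "g = g1 \<or> g = g2" if g: "g \<in> VB C A" for g
  proof -
    have ginj: "inj_on g C" and ge: "g \<in> extensional C" and gv: "\<forall>c\<in>C. g c \<in> inc A c"
      using g by (auto simp: VB_def bij_betw_def inc_def)
    have gj: "j < k \<Longrightarrow> g (ws ! j) = a j \<or> g (ws ! j) = a (pv j)" for j using gv wsC incj by blast
    show ?thesis
    proof (cases "\<exists>j0<k. g (ws ! j0) = a j0")
      case True
      then obtain j0 where j0: "j0 < k" "g (ws ! j0) = a j0" by blast
      have prp: "g (ws ! ((j0 + t) mod k)) = a ((j0 + t) mod k)" for t
      proof (induction t)
        case 0 thus ?case using j0 by simp
      next
        case (Suc t)
        define m where "m = (j0 + t) mod k"
        have m: "m < k" using kpos by (simp add: m_def)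
        have e: "(j0 + Suc t) mod k = nx m" by (simp add: m_def nx_def mod_Suc_eq)
        have "g (ws ! nx m) \<noteq> a m"
        proof
          assume "g (ws ! nx m) = a m"
          hence "g (ws ! nx m) = g (ws ! m)" using Suc by (simp add: m_def)
          hence "ws ! nx m = ws ! m" using ginj wsC[OF m] wsC[OF nxlt[OF m]] by (simp add: inj_on_eq_iff)
          thus False using wsne[OF m] by simp
        qed
        hence "g (ws ! nx m) = a (nx m)" using gj[OF nxlt[OF m]] pvnx[OF m] by auto
        thus ?case using e by simp
      qed
      have "g = g1"
      proof
        fix x show "g x = g1 x"
        proof (cases "x \<in> C")
          case True
          define j where "j = idx x"
          have j: "j < k" "ws ! j = x" using idxC[OF True] by (auto simp: j_def)
          have "(j0 + (j + k - j0)) mod k = j" using j0 j by simp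
          hence "g (ws ! j) = a j" using prp[of "j + k - j0"] by simp
          thus ?thesis using j(2) g1j[OF j(1)] by simp
        next
          case False thus ?thesis using ge by (simp add: g1_def extensional_def)
        qed
      qed
      thus ?thesis by simp
    next
      case False
      have "g = g2"
      proof
        fix x show "g x = g2 x"
        proof (cases "x \<in> C")
          case True
          define j where "j = idx x"
          have j: "j < k" "ws ! j = x" using idxC[OF True] by (auto simp: j_def)
          have "g (ws ! j) = a (pv j)" using gj[OF j(1)] False j(1) by auto
          thus ?thesis using j(2) g2j[OF j(1)] by simp
        next
          case False thus ?thesis using ge by (simp add: g2_def extensional_def)
        qed
      qed
      thus ?thesis by simp
    qed
  qed
  have g12: "g1 \<noteq> g2" using g1j[OF kpos] g2j[OF kpos] ane[OF kpos] by metis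
  have VBe: "VB C A = {g1, g2}" using g1V g2V VBsub by auto
  have nl: "\<forall>b\<in>A. fst b \<noteq> snd b" using ori by (simp add: orient_def)
  define f where "f = fwd_count A ws"
  define z where "z = omega5 ^ f * cnj omega5 ^ (k - f)"
  have q12: "qterm C g1 g2 = - z"
  proof -
    have ig2: "inj_on g2 C" using g2V by (auto simp: VB_def bij_betw_def)
    have rel: "relp C g1 g2 = cycle_of_list ws"
    proof
      fix x show "relp C g1 g2 x = cycle_of_list ws x"
      proof (cases "x \<in> C")
        case True
        define j where "j = idx x"
        have j: "j < k" "ws ! j = x" using idxC[OF True] by (auto simp: j_def)
        have "g2 (ws ! nx j) = a j" using g2j[OF nxlt[OF j(1)]] pvnx[OF j(1)] by simp
        hence "inv_into C g2 (a j) = ws ! nx j" using ig2 wsC[OF nxlt[OF j(1)]] by (simp add: inv_into_f_eq)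
        hence l: "relp C g1 g2 x = ws ! nx j" using True j g1j[OF j(1)] by (simp add: relp_def)
        have "map (cycle_of_list ws) ws = rotate1 ws" using cyclic_rotation[OF dist, of 1] by simp
        hence "cycle_of_list ws (ws ! j) = rotate1 ws ! j" using j(1) by (metis nth_map k_def)
        also have "\<dots> = ws ! nx j" using j(1) by (simp add: nth_rotate1 nx_def k_def)
        finally show ?thesis using l j by simp
      next
        case False thus ?thesis using C by (simp add: relp_def id_outside_supp)
      qed
    qed
    have sg: "sign (relp C g1 g2) = (-1) ^ (k - 1)" unfolding rel k_def by (rule sign_cycle[OF dist])
    have P1: "(\<Prod>x\<in>C. Mi (g1 x) x * cnj (Mi (g2 x) x)) = (\<Prod>j<k. Mi (a j) (ws ! j) * cnj (Mi (a (pv j)) (ws ! j)))"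
    proof -
      have "(\<Prod>x\<in>C. Mi (g1 x) x * cnj (Mi (g2 x) x)) = (\<Prod>j<k. Mi (g1 (ws ! j)) (ws ! j) * cnj (Mi (g2 (ws ! j)) (ws ! j)))"
        unfolding imgC[symmetric] by (rule prod.reindex[OF injn, unfolded comp_def])
      also have "\<dots> = (\<Prod>j<k. Mi (a j) (ws ! j) * cnj (Mi (a (pv j)) (ws ! j)))"
        by (rule prod.cong[OF refl]) (simp add: g1j g2j)
      finally show ?thesis .
    qed
    have P2: "(\<Prod>j<k. cnj (Mi (a (pv j)) (ws ! j))) = (\<Prod>j<k. cnj (Mi (a j) (ws ! nx j)))"
      by (rule prod.reindex_bij_witness[where i=nx and j=pv]) (auto simp: nxpv pvnx nxlt pvlt)
    have P3: "Mi (a j) (ws ! j) * cnj (Mi (a j) (ws ! nx j)) =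
        (if (ws ! j, ws ! nx j) \<in> A then - omega5 else - cnj omega5)" if j: "j < k" for j
      using wsne[OF j] by (auto simp: a_def arcb_def Mi_def)
    define P where "P j = ((ws ! j, ws ! nx j) \<in> A)" for j
    have c1: "card ({..<k} \<inter> {j. P j}) = f"
    proof -
      have "{..<k} \<inter> {j. P j} = {j. j < length ws \<and> (ws ! j, ws ! ((j + 1) mod length ws)) \<in> A}"
        by (auto simp: P_def nx_def k_def)
      thus ?thesis by (simp add: f_def fwd_count_def)
    qed
    have c2: "card ({..<k} \<inter> - {j. P j}) = k - f"
    proof -
      have "{..<k} \<inter> - {j. P j} = {..<k} - ({..<k} \<inter> {j. P j})" by auto
      thus ?thesis using c1 by (simp add: card_Diff_subset)
    qed
    have fk: "f \<le> k" using c1 by (metis card_mono finite_lessThan inf_le1 card_lessThan)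
    have P4: "(\<Prod>j<k. if P j then - omega5 else - cnj omega5) = (- omega5) ^ f * (- cnj omega5) ^ (k - f)"
      by (simp add: prod.If_cases c1 c2)
    have P5: "(- omega5) ^ f * (- cnj omega5) ^ (k - f) = (-1) ^ k * z"
    proof -
      have a1: "(- omega5) ^ f = (-1) ^ f * omega5 ^ f" by (rule power_minus)
      have a2: "(- cnj omega5) ^ (k - f) = (-1) ^ (k - f) * cnj omega5 ^ (k - f)" by (rule power_minus)
      have "(- omega5) ^ f * (- cnj omega5) ^ (k - f) = ((-1) ^ f * (-1) ^ (k - f)) * z"
        unfolding a1 a2 z_def by (simp only: mult_ac)
      also have "(-1::complex) ^ f * (-1) ^ (k - f) = (-1) ^ k" using fk by (simp add: power_add[symmetric])
      finally show ?thesis .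
    qed
    have prodv: "(\<Prod>x\<in>C. Mi (g1 x) x * cnj (Mi (g2 x) x)) = (-1) ^ k * z"
    proof -
      have "(\<Prod>j<k. Mi (a j) (ws ! j) * cnj (Mi (a (pv j)) (ws ! j)))
          = (\<Prod>j<k. Mi (a j) (ws ! j)) * (\<Prod>j<k. cnj (Mi (a (pv j)) (ws ! j)))" by (rule prod.distrib)
      also have "\<dots> = (\<Prod>j<k. Mi (a j) (ws ! j) * cnj (Mi (a j) (ws ! nx j)))" unfolding P2 by (rule prod.distrib[symmetric])
      also have "\<dots> = (\<Prod>j<k. if P j then - omega5 else - cnj omega5)"
        by (rule prod.cong[OF refl]) (simp add: P3 P_def)
      finally show ?thesis using P1 P4 P5 by simp
    qed
    have m1: "(-1::complex) ^ (k - 1) * (-1) ^ k = -1"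
    proof -
      obtain m where m: "k = Suc m" using kpos by (cases k) auto
      have "(-1::complex) ^ m * (-1) ^ m = 1" by (simp add: power_add[symmetric])
      thus ?thesis using m by simp
    qed
    have "qterm C g1 g2 = ((-1) ^ (k - 1) * (-1) ^ k) * z"
      unfolding qterm_def sg prodv by simp
    thus ?thesis using m1 by simp
  qed
  have "Q C A = qterm C g1 g1 + qterm C g1 g2 + (qterm C g2 g1 + qterm C g2 g2)"
    unfolding Q_def VBe using g12 by simp
  also have "\<dots> = 2 - (z + cnj z)"
    using qterm_self[OF g1V nl] qterm_self[OF g2V nl] qterm_swap[OF fC g1V g2V] q12 by simp
  also have "\<dots> = complex_of_real (qval (cyc_val A ws mod 5))"
  proof -
    have fk: "f \<le> k" unfolding f_def fwd_count_def k_def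
      by (rule le_trans[OF card_mono[of "{..<length ws}"]]) auto
    have "z + cnj z = complex_of_real (2 * cos (2 * pi * real (cyc_val A ws) / 5))"
      using z_re[OF fk] by (simp add: z_def cyc_val_def Let_def f_def k_def)
    thus ?thesis using qval_cos[of "cyc_val A ws"]
      by (metis of_real_diff of_real_numeral)
  qed
  finally show ?thesis .
qed

lemma rt_closed:
  assumes "(x, y) \<in> (sub_adj S F)\<^sup>*" "x \<in> X" "\<forall>p q. p \<in> X \<longrightarrow> joined F p q \<longrightarrow> q \<in> X"
  shows "y \<in> X"
  using assms(1)
proof (induction rule: rtrancl_induct)
  case base thus ?case using assms(2) by simp
next
  case (step y z)
  hence "joined F y z" by (auto simp: sub_adj_def joined_def)
  thus ?case using step assms(3) by blast
qed

lemma cyc_reach: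
  assumes c: "cycle_list F ws" and sub: "set ws \<subseteq> S"
  shows "j < length ws \<Longrightarrow> (ws ! 0, ws ! j) \<in> (sub_adj S F)\<^sup>*"
proof (induction j)
  case 0 thus ?case by simp
next
  case (Suc j)
  hence j: "j < length ws" by simp
  have "(j + 1) mod length ws = Suc j" using Suc.prems by simp
  hence "joined F (ws ! j) (ws ! Suc j)" using cyc_next[OF c j] by simp
  moreover have "ws ! j \<in> S" "ws ! Suc j \<in> S" using sub j Suc.prems nth_mem by blast+
  ultimately have st: "(ws ! j, ws ! Suc j) \<in> sub_adj S F" by (auto simp: sub_adj_def joined_def)
  show ?case by (rule rtrancl_into_rtrancl[OF Suc.IH[OF j] st])
qed

lemma phi_gt1: "phi > 1"
proof -
  have "sqrt 5 > 1" by simp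
  thus ?thesis by (simp add: phi_def)
qed

lemma qval_cls:
  assumes "r < 5" "r' < 5" "qval r = qval r'"
  shows "(r = 0 \<longleftrightarrow> r' = 0) \<and> (r \<in> {1, 4} \<longleftrightarrow> r' \<in> {1, 4}) \<and> (r \<in> {2, 3} \<longleftrightarrow> r' \<in> {2, 3})"
proof -
  have s5: "sqrt 5 > 0" by simp
  have p1: "phi > 1" by (rule phi_gt1)
  have v1: "sqrt 5 / phi > 0" using s5 p1 by simp
  have v2: "sqrt 5 * phi > 0" using s5 p1 by simp
  have v12: "sqrt 5 / phi < sqrt 5 * phi"
  proof -
    have "sqrt 5 / phi < sqrt 5" using s5 p1 by (simp add: divide_less_eq)
    also have "\<dots> < sqrt 5 * phi" using s5 p1 by simp
    finally show ?thesis .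
  qed
  have cr: "r = 0 \<or> r = 1 \<or> r = 4 \<or> r = 2 \<or> r = 3" and cr': "r' = 0 \<or> r' = 1 \<or> r' = 4 \<or> r' = 2 \<or> r' = 3"
    using assms(1,2) by linarith+
  show ?thesis using cr cr' assms(3) v1 v2 v12 unfolding qval_def by auto
qed

lemma qcls0: "\<forall>r r'. r < 5 \<longrightarrow> r' < 5 \<longrightarrow> qval r = qval r' \<longrightarrow> ((r = 0) \<longleftrightarrow> (r' = 0))"
proof (intro allI impI)
  fix r r' :: nat assume "r < 5" "r' < 5" "qval r = qval r'"
  from qval_cls[OF this] show "(r = 0) \<longleftrightarrow> (r' = 0)" by (rule conjunct1)
qed

lemma qcls14: "\<forall>r r'. r < 5 \<longrightarrow> r' < 5 \<longrightarrow> qval r = qval r' \<longrightarrow> ((r \<in> {1, 4}) \<longleftrightarrow> (r' \<in> {1, 4}))"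
proof (intro allI impI)
  fix r r' :: nat assume "r < 5" "r' < 5" "qval r = qval r'"
  from qval_cls[OF this] show "(r \<in> {1, 4}) \<longleftrightarrow> (r' \<in> {1, 4})" by blast
qed

lemma qcls23: "\<forall>r r'. r < 5 \<longrightarrow> r' < 5 \<longrightarrow> qval r = qval r' \<longrightarrow> ((r \<in> {2, 3}) \<longleftrightarrow> (r' \<in> {2, 3}))"
proof (intro allI impI)
  fix r r' :: nat assume "r < 5" "r' < 5" "qval r = qval r'"
  from qval_cls[OF this] show "(r \<in> {2, 3}) \<longleftrightarrow> (r' \<in> {2, 3})" by blast
qed

lemma cycle_comp:
  assumes fS: "finite S" and fF: "finite F" and ori: "orient F"
    and deg: "\<forall>v\<in>S. card (inc F v) = 2" and inS: "\<forall>a\<in>F. fst a \<in> S \<and> snd a \<in> S" and Sne: "S \<noteq> {}"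
  shows "\<exists>C. C \<in> components S F \<and> C \<noteq> {} \<and> card C = card (comp_arcs F C)
           \<and> Q C (comp_arcs F C) = complex_of_real (tfac C (comp_arcs F C))"
proof -
  have H: "\<forall>c\<in>S. \<forall>p. \<exists>y. joined F c y \<and> y \<noteq> p \<and> y \<in> S"
  proof (intro ballI allI)
    fix c p assume cS: "c \<in> S"
    obtain b1 b2 where b: "inc F c = {b1, b2}" "b1 \<noteq> b2" using deg cS by (meson card_2_iff)
    define oth where "oth b = (if fst b = c then snd b else fst b)" for b :: "'a \<times> 'a"
    have ob: "joined F c (oth b) \<and> oth b \<in> S" if "b \<in> inc F c" for b
      using that inS by (cases b) (auto simp: inc_def oth_def joined_def)
    have "oth b1 \<noteq> oth b2"
    proof
      assume eq: "oth b1 = oth b2"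
      have "b1 \<in> inc F c" "b2 \<in> inc F c" using b by auto
      thus False using eq b(2) ori by (cases b1; cases b2) (auto simp: inc_def oth_def orient_def split: if_splits)
    qed
    thus "\<exists>y. joined F c y \<and> y \<noteq> p \<and> y \<in> S" using ob b by (metis insertI1 insertI2 singletonI)
  qed
  obtain x0 where x0: "x0 \<in> S" using Sne by auto
  obtain y0 where y0: "joined F x0 y0" "y0 \<in> S" using H x0 by blast
  obtain ws where c: "cycle_list F ws" and wsS: "set ws \<subseteq> S"
    using exists_cycle[OF fS ori x0 y0(2) y0(1) H] by blast
  define C where "C = set ws"
  define A where "A = comp_arcs F C"
  have CS: "C \<subseteq> S" using wsS by (simp add: C_def)
  have degC: "\<forall>x\<in>set ws. card (inc F x) = 2" using deg wsS by auto
  have clos: "y \<in> C" if "x \<in> C" "joined F x y" for x y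
    using cyc_closed[OF fF c degC] that by (simp add: C_def)
  have AF: "A \<subseteq> F" by (auto simp: A_def comp_arcs_def)
  have AinC: "\<forall>a\<in>A. fst a \<in> C \<and> snd a \<in> C"
  proof
    fix a assume a: "a \<in> A"
    hence aF: "a \<in> F" and "fst a \<in> C \<or> snd a \<in> C" by (auto simp: A_def comp_arcs_def)
    moreover have "joined F (fst a) (snd a)" "joined F (snd a) (fst a)" using aF by (auto simp: joined_def)
    ultimately show "fst a \<in> C \<and> snd a \<in> C" using clos by blast
  qed
  have incA: "inc A x = inc F x" if "x \<in> C" for x using that by (auto simp: inc_def A_def comp_arcs_def)
  have degA: "\<forall>x\<in>C. card (inc A x) = 2" using incA degC by (simp add: C_def)
  have fA: "finite A" using AF fF by (rule finite_subset)
  have oriA: "orient A" using ori AF unfolding orient_def by blast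
  have fC: "finite C" by (simp add: C_def)
  have cardCA: "card C = card A"
  proof -
    have "(\<Sum>x\<in>C. card {a \<in> A. fst a = x \<or> snd a = x}) = (\<Sum>a\<in>A. card {x \<in> C. fst a = x \<or> snd a = x})"
      by (rule dcount[OF fC fA])
    moreover have "(\<Sum>x\<in>C. card {a \<in> A. fst a = x \<or> snd a = x}) = (\<Sum>x\<in>C. 2)"
      using degA by (intro sum.cong) (auto simp: inc_def)
    moreover have "(\<Sum>a\<in>A. card {x \<in> C. fst a = x \<or> snd a = x}) = (\<Sum>a\<in>A. 2)"
    proof (rule sum.cong[OF refl])
      fix a assume a: "a \<in> A"
      have "{x \<in> C. fst a = x \<or> snd a = x} = {fst a, snd a}" using AinC a by auto
      moreover have "fst a \<noteq> snd a" using oriA a by (auto simp: orient_def)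
      ultimately show "card {x \<in> C. fst a = x \<or> snd a = x} = 2" by simp
    qed
    ultimately show ?thesis by simp
  qed
  have joinA: "joined A x y" if "x \<in> C" "joined F x y" for x y
    using that by (auto simp: joined_def A_def comp_arcs_def)
  have cA: "cycle_list A ws"
    using c joinA unfolding cycle_list_def C_def by (metis nth_mem)
  have QC: "Q C A = complex_of_real (qval (cyc_val A ws mod 5))"
    by (rule cyc_Q[OF fA oriA cA C_def degA AinC cardCA])
  have Ccomp: "C \<in> components S F"
  proof -
    have k0: "0 < length ws" using c by (auto simp: cycle_list_def)
    have w0: "ws ! 0 \<in> S" using wsS k0 nth_mem by blast
    have "sub_conn S F `` {ws ! 0} = C"
    proof
      show "sub_conn S F `` {ws ! 0} \<subseteq> C"
      proof
        fix y assume "y \<in> sub_conn S F `` {ws ! 0}"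
        hence r: "(ws ! 0, y) \<in> (sub_adj S F)\<^sup>*" by (auto simp: sub_conn_def)
        have cl: "\<forall>p q. p \<in> C \<longrightarrow> joined F p q \<longrightarrow> q \<in> C" using clos by blast
        have w0C: "ws ! 0 \<in> C" using k0 by (simp add: C_def)
        show "y \<in> C" by (rule rt_closed[OF r w0C cl])
      qed
      show "C \<subseteq> sub_conn S F `` {ws ! 0}"
      proof
        fix y assume "y \<in> C"
        then obtain j where j: "j < length ws" "y = ws ! j" by (auto simp: C_def in_set_conv_nth)
        have "(ws ! 0, ws ! j) \<in> (sub_adj S F)\<^sup>*" by (rule cyc_reach[OF c wsS j(1)])
        thus "y \<in> sub_conn S F `` {ws ! 0}" using w0 wsS j by (auto simp: sub_conn_def)
      qed
    qed
    thus ?thesis unfolding components_def using w0 by (metis quotientI)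
  qed
  have connC: "(x, y) \<in> (sub_adj C A)\<^sup>*" if "x \<in> C" "y \<in> C" for x y
  proof -
    have r: "(ws ! 0, z) \<in> (sub_adj C A)\<^sup>*" if z: "z \<in> C" for z
    proof -
      obtain j where j: "j < length ws" "z = ws ! j" using z by (auto simp: C_def in_set_conv_nth)
      show ?thesis using cyc_reach[OF cA _ j(1)] j by (simp add: C_def)
    qed
    have s: "sym ((sub_adj C A)\<^sup>*)" using sym_sub_adj by (rule sym_rtrancl)
    have "(x, ws ! 0) \<in> (sub_adj C A)\<^sup>*" using r[OF that(1)] s by (auto simp: sym_def)
    thus ?thesis using r[OF that(2)] by (rule rtrancl_trans)
  qed
  have allc: "set ws' = C \<and> cycle_arcs A ws' = A" if c': "cycle_list A ws'" for ws'
  proof -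
    have sub: "set ws' \<subseteq> C"
    proof
      fix x assume "x \<in> set ws'"
      then obtain j where j: "j < length ws'" "x = ws' ! j" by (auto simp: in_set_conv_nth)
      have "joined A x (ws' ! ((j + 1) mod length ws'))" using cyc_next[OF c' j(1)] j by simp
      thus "x \<in> C" using AinC by (auto simp: joined_def)
    qed
    have deg': "\<forall>x\<in>set ws'. card (inc A x) = 2" using degA sub by auto
    have k0: "0 < length ws'" using c' by (auto simp: cycle_list_def)
    have w0: "ws' ! 0 \<in> C" using sub k0 nth_mem by blast
    have eq: "set ws' = C"
    proof
      show "C \<subseteq> set ws'"
      proof
        fix y assume "y \<in> C"
        have r: "(ws' ! 0, y) \<in> (sub_adj C A)\<^sup>*" using connC[OF w0 \<open>y \<in> C\<close>] .
        have cl: "\<forall>p q. p \<in> set ws' \<longrightarrow> joined A p q \<longrightarrow> q \<in> set ws'"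
          using cyc_closed[OF fA c' deg'] by blast
        have w0': "ws' ! 0 \<in> set ws'" using k0 by simp
        show "y \<in> set ws'" by (rule rt_closed[OF r w0' cl])
      qed
    qed (rule sub)
    have "A \<subseteq> cycle_arcs A ws'"
    proof
      fix b assume b: "b \<in> A"
      have "fst b \<in> set ws'" using AinC b eq by auto
      then obtain j where j: "j < length ws'" "fst b = ws' ! j" by (auto simp: in_set_conv_nth)
      have "b \<in> inc A (ws' ! j)" using b j by (simp add: inc_def)
      hence bb: "b = arcb A (ws' ! j) (ws' ! ((j + 1) mod length ws')) \<or>
             b = arcb A (ws' ! ((j + length ws' - 1) mod length ws')) (ws' ! j)"
        using cyc_inc[OF fA c' deg' j(1)] by auto
      have e: "((j + length ws' - 1) mod length ws' + 1) mod length ws' = j" using mod_prev[OF k0 j(1)] .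
      show "b \<in> cycle_arcs A ws'"
        using bb b j(1) pv_lt[OF j(1)] e unfolding cycle_arcs_def arcb_def
        by (auto split: if_splits)
    qed
    moreover have "cycle_arcs A ws' \<subseteq> A" by (auto simp: cycle_arcs_def)
    ultimately show ?thesis using eq by auto
  qed
  have uni: "unicyclic C A"
    unfolding unicyclic_def
  proof (intro conjI)
    show "\<forall>e\<in>A. fst e \<in> C \<and> snd e \<in> C" by (rule AinC)
    show "\<forall>u\<in>C. \<forall>v\<in>C. (u, v) \<in> (sub_adj C A)\<^sup>*" using connC by blast
    show "\<exists>!Z. is_cycle A Z"
    proof
      show "is_cycle A A" unfolding is_cycle_def using cA allc by metis
      show "Z = A" if "is_cycle A Z" for Z using that allc unfolding is_cycle_def by blast
    qed
  qed
  define r0 where "r0 = cyc_val A ws mod 5"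
  have cls: "(\<exists>ws'. cycle_list A ws' \<and> P (cyc_val A ws' mod 5)) \<longleftrightarrow> P r0"
    if "\<forall>r r'. r < 5 \<longrightarrow> r' < 5 \<longrightarrow> qval r = qval r' \<longrightarrow> (P r \<longleftrightarrow> P r')" for P
  proof
    assume "\<exists>ws'. cycle_list A ws' \<and> P (cyc_val A ws' mod 5)"
    then obtain ws' where w': "cycle_list A ws'" "P (cyc_val A ws' mod 5)" by blast
    have "set ws' = C" using allc[OF w'(1)] by simp
    hence "Q C A = complex_of_real (qval (cyc_val A ws' mod 5))"
      using cyc_Q[OF fA oriA w'(1) _ degA AinC cardCA] by simp
    hence "qval (cyc_val A ws' mod 5) = qval r0" using QC by (simp add: r0_def)
    thus "P r0" using that w'(2) by (metis mod_less_divisor zero_less_numeral r0_def)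
  next
    assume "P r0" thus "\<exists>ws'. cycle_list A ws' \<and> P (cyc_val A ws' mod 5)" using cA by (auto simp: r0_def)
  qed
  have van: "vanishing_comp C A \<longleftrightarrow> r0 = 0"
    unfolding vanishing_comp_def using uni cls[of "\<lambda>r. r = 0", OF qcls0] by simp
  have alp: "alpha_comp C A \<longleftrightarrow> r0 \<in> {2, 3}"
    unfolding alpha_comp_def using uni cls[of "\<lambda>r. r \<in> {2, 3}", OF qcls23] by simp
  have bet: "beta_comp C A \<longleftrightarrow> r0 \<in> {1, 4}"
    unfolding beta_comp_def using uni cls[of "\<lambda>r. r \<in> {1, 4}", OF qcls14] by simp
  have r5: "r0 < 5" by (simp add: r0_def)
  have "tfac C A = qval r0"
  proof -
    have "r0 = 0 \<or> r0 \<in> {1, 4} \<or> r0 \<in> {2, 3}" using r5 by auto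
    thus ?thesis unfolding tfac_def qval_def using van alp bet cardCA by auto
  qed
  hence "Q C A = complex_of_real (tfac C A)" using QC by (simp add: r0_def)
  moreover have "C \<noteq> {}" using c by (auto simp: C_def cycle_list_def)
  ultimately show ?thesis using Ccomp cardCA by (auto simp: A_def)
qed

lemma T_empty: "T ({}::'a set) {} = 1"
proof -
  have "components ({}::'a set) {} = {}" by (simp add: components_def)
  thus ?thesis by (simp add: T_def all_regular_def n_alpha_def n_beta_def n_van_def delta0_def Wt_def)
qed

lemma comp_sub: "C \<in> components S F \<Longrightarrow> C \<subseteq> S"
  unfolding components_def by (auto elim!: quotientE simp: sub_conn_def)

lemma QT:
  fixes S :: "'a set"
  shows "finite S \<Longrightarrow> finite F \<Longrightarrow> orient F \<Longrightarrow> card F = card S \<Longrightarrow> Q S F = complex_of_real (T S F)"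
proof (induction "card S" arbitrary: S F rule: less_induct)
  case less
  note fS = less.prems(1) and fF = less.prems(2) and ori = less.prems(3) and cFS = less.prems(4)
  show ?case
  proof (cases "S = {}")
    case True
    hence "F = {}" using cFS fF by simp
    thus ?thesis using True Q_empty[where 'a='a] T_empty[where 'a='a] by simp
  next
    case Sne: False
    show ?thesis
    proof (cases "\<exists>v\<in>S. card (inc F v) < 2")
      case True
      then obtain v where vS: "v \<in> S" and lt: "card (inc F v) < 2" by blast
      have fi: "finite (inc F v)" using fF by (simp add: inc_def)
      show ?thesis
      proof (cases "card (inc F v) = 0")
        case True
        hence "inc F v = {}" using fi by simp
        hence na: "\<forall>e\<in>F. fst e \<noteq> v \<and> snd e \<noteq> v" unfolding inc_def by blast
        show ?thesis using Q_noarc[OF vS na] T_noarc[OF fS vS na] by simp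
      next
        case False
        hence "card (inc F v) = 1" using lt by simp
        then obtain e where ie: "inc F v = {e}" by (rule card_1_singletonE)
        have eF: "e \<in> F" and ve: "v = fst e \<or> v = snd e" using ie by (auto simp: inc_def)
        have leaf: "\<forall>a\<in>F. fst a = v \<or> snd a = v \<longrightarrow> a = e" using ie by (auto simp: inc_def)
        have ne: "fst e \<noteq> snd e" using ori eF by (auto simp: orient_def)
        define u where "u = (if fst e = v then snd e else fst e)"
        have e1: "e = (v, u) \<or> e = (u, v)" using ve by (cases e) (auto simp: u_def)
        have uv: "u \<noteq> v" using ve ne by (auto simp: u_def)
        have Qe: "Q S F = Q (S - {v}) (F - {e})" by (rule Q_leaf[OF fS fF vS eF ve ne leaf])
        have Te: "T S F = T (S - {v}) (F - {e})"
        proof (cases "u \<in> S")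
          case True thus ?thesis using T_leaf_int[OF fS fF vS True uv e1 eF leaf] by simp
        next
          case False thus ?thesis using T_leaf_ext[OF fS vS False e1 eF leaf] by simp
        qed
        have "card (S - {v}) < card S" using fS vS by (metis card_Diff1_less)
        moreover have "orient (F - {e})" using ori by (auto simp: orient_def)
        moreover have "card (F - {e}) = card (S - {v})" using cFS eF vS fF fS by simp
        ultimately have "Q (S - {v}) (F - {e}) = complex_of_real (T (S - {v}) (F - {e}))"
          using less.hyps[of "S - {v}" "F - {e}"] fS fF by simp
        thus ?thesis using Qe Te by simp
      qed
    next
      case False
      hence dg: "\<forall>v\<in>S. card (inc F v) \<ge> 2" by auto
      note d2 = deg2[OF fS fF ori cFS dg]
      obtain C where C: "C \<in> components S F" "C \<noteq> {}" "card C = card (comp_arcs F C)"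
        "Q C (comp_arcs F C) = complex_of_real (tfac C (comp_arcs F C))"
        using cycle_comp[OF fS fF ori d2(1) d2(2) Sne] by blast
      define A where "A = comp_arcs F C"
      have CS: "C \<subseteq> S" by (rule comp_sub[OF C(1)])
      have AF: "A \<subseteq> F" by (auto simp: A_def comp_arcs_def)
      have fC: "finite C" using CS fS by (rule finite_subset)
      have fA: "finite A" using AF fF by (rule finite_subset)
      have hyp: "\<forall>g\<in>VB (C \<union> (S - C)) (A \<union> (F - A)). g ` C \<subseteq> A"
      proof
        fix g assume g: "g \<in> VB (C \<union> (S - C)) (A \<union> (F - A))"
        show "g ` C \<subseteq> A"
        proof
          fix x assume "x \<in> g ` C"
          then obtain c where c: "c \<in> C" "x = g c" by blast
          have "g c \<in> A \<union> (F - A)" "fst (g c) = c \<or> snd (g c) = c"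
            using g c(1) by (auto simp: VB_def bij_betw_def)
          thus "x \<in> A" using c AF by (auto simp: A_def comp_arcs_def)
        qed
      qed
      have Qs: "Q S F = Q C A * Q (S - C) (F - A)"
      proof -
        have "Q (C \<union> (S - C)) (A \<union> (F - A)) = Q C A * Q (S - C) (F - A)"
          by (rule Q_split) (use fC fS fA fF C(3) hyp in \<open>auto simp: A_def\<close>)
        moreover have "C \<union> (S - C) = S" "A \<union> (F - A) = F" using CS AF by auto
        ultimately show ?thesis by simp
      qed
      have Ts: "T S F = tfac C A * T (S - C) (F - A)" unfolding A_def by (rule T_remove[OF fS C(1)])
      have c1: "card (S - C) = card S - card C" using fC CS by (simp add: card_Diff_subset)
      have c2: "card C > 0" using fC C(2) by (simp add: card_gt_0_iff)
      have c3: "card C \<le> card S" using CS fS by (rule card_mono[rotated])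
      have "card (S - C) < card S" using c1 c2 c3 by linarith
      moreover have "orient (F - A)" using ori by (auto simp: orient_def)
      moreover have "card (F - A) = card (S - C)"
      proof -
        have "card (F - A) = card F - card A" using fA AF by (simp add: card_Diff_subset)
        thus ?thesis using c1 cFS C(3) by (simp add: A_def)
      qed
      ultimately have "Q (S - C) (F - A) = complex_of_real (T (S - C) (F - A))"
        using less.hyps[of "S - C" "F - A"] fS fF by simp
      thus ?thesis using Qs Ts C(4) by (simp add: A_def)
    qed
  qed
qed

theorem mainTheorem12:
  fixes V :: "'a set" and E :: "('a \<times> 'a) set" and V' :: "'a set"
  assumes "oriented_graph V E" and "V' \<subseteq> V"
  shows "det_on V' (Lmat omega5 E) =
    complex_of_real (\<Sum>E'\<in>{E'. E' \<subseteq> E \<and> card E' = card V' \<and> all_regular V' E'}.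
       delta0 (n_van V' E') * sqrt 5 ^ (n_alpha V' E' + n_beta V' E')
       * ((1 + sqrt 5) / 2) powi (int (n_alpha V' E') - int (n_beta V' E')))"
proof -
  have og: "oriented_graph V E" by (rule assms(1))
  have fV: "finite V" and EV: "E \<subseteq> V \<times> V" using og by (auto simp: oriented_graph_def)
  have fE: "finite E" using EV fV by (meson finite_SigmaI finite_subset)
  have fS: "finite V'" using assms(2) fV by (rule finite_subset)
  have ori: "orient F" if FE: "F \<subseteq> E" for F
  proof -
    have "\<forall>u. (u, u) \<notin> E" "\<forall>u v. (u, v) \<in> E \<longrightarrow> (v, u) \<notin> E" using og by (auto simp: oriented_graph_def)
    thus ?thesis using FE unfolding orient_def by (metis prod.collapse subsetD)
  qed
  define Fs where "Fs = {F. F \<subseteq> E \<and> card F = card V'}"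
  have "det_on V' (Lmat omega5 E) =
      (\<Sum>p\<in>{p. p permutes V'}. of_int (sign p) * (\<Prod>i\<in>V'. \<Sum>e\<in>E. Mi e i * cnj (Mi e (p i))))"
    unfolding det_on_def
  proof (intro sum.cong refl arg_cong2[where f="(*)"] prod.cong)
    fix p i assume p: "p \<in> {p. p permutes V'}" and i: "i \<in> V'"
    have "p i \<in> V'" using p i by (simp add: permutes_in_image)
    thus "Lmat omega5 E i (p i) = (\<Sum>e\<in>E. Mi e i * cnj (Mi e (p i)))"
      using Lmat_sum[OF og] i assms(2) by blast
  qed
  also have "\<dots> = (\<Sum>F\<in>Fs. Q V' F)" unfolding Fs_def by (rule CB[OF fS fE])
  also have "\<dots> = (\<Sum>F\<in>Fs. complex_of_real (T V' F))"
  proof (rule sum.cong[OF refl])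
    fix F assume "F \<in> Fs"
    hence "F \<subseteq> E" "card F = card V'" by (auto simp: Fs_def)
    thus "Q V' F = complex_of_real (T V' F)" using QT[OF fS _ ori] fE by (meson finite_subset)
  qed
  also have "\<dots> = complex_of_real (\<Sum>F\<in>Fs. T V' F)" by simp
  also have "(\<Sum>F\<in>Fs. T V' F) = (\<Sum>E'\<in>{E'. E' \<subseteq> E \<and> card E' = card V' \<and> all_regular V' E'}.
       delta0 (n_van V' E') * sqrt 5 ^ (n_alpha V' E' + n_beta V' E')
       * ((1 + sqrt 5) / 2) powi (int (n_alpha V' E') - int (n_beta V' E')))"
  proof -
    have fFs: "finite Fs" using fE by (simp add: Fs_def)
    have "(\<Sum>F\<in>Fs. T V' F) = (\<Sum>F\<in>Fs. if all_regular V' F then delta0 (n_van V' F) * sqrt 5 ^ (n_alpha V' F + n_beta V' F)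
       * ((1 + sqrt 5) / 2) powi (int (n_alpha V' F) - int (n_beta V' F)) else 0)"
      by (rule sum.cong[OF refl]) (simp add: T_def Wt_def phi_def mult.assoc)
    also have "\<dots> = (\<Sum>F\<in>{F \<in> Fs. all_regular V' F}. delta0 (n_van V' F) * sqrt 5 ^ (n_alpha V' F + n_beta V' F)
       * ((1 + sqrt 5) / 2) powi (int (n_alpha V' F) - int (n_beta V' F)))"
      by (rule sum.inter_filter[OF fFs, symmetric])
    also have "{F \<in> Fs. all_regular V' F} = {E'. E' \<subseteq> E \<and> card E' = card V' \<and> all_regular V' E'}"
      by (auto simp: Fs_def)
    finally show ?thesis .
  qed
  finally show ?thesis .
qed

end
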